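(* Let $A=kQ/I$ be a string algebra and let $M$ be an indecomposable string module whose string is a directed string (a path of $Q$ not lying in $I$, possibly of length zero). Then $\mho_1(M)\cong D_1\oplus D_2$, where each of $D_1$, $D_2$ is either zero or a string module whose string is a directed string.
   Context: Conventions: $k$ is a field, $Q$ a finite connected quiver, arrows composed left to right, modules are finite-dimensional right $A$-modules. String algebra: $A=kQ/I$ with $I$ admissible such that (1) each vertex is the start of at most two arrows and the end of at most two arrows; (2) for each arrow $\beta$ at most one arrow $\gamma$ has $\beta\gamma\notin I$; (3) for each arrow $\beta$ at most one arrow $\alpha$ has $\alpha\beta\notin I$; (4) $I$ is generated by paths of length $\ge 2$. For a path $p$ of $Q$ not in $I$ from $x$ to $y$ (possibly trivial, $x=y$), the corresponding string module is the uniserial module with top $S(x)$, socle $S(y)$ and composition factors the simples at the vertices of $p$; such a module is said to correspond to a directed string. Cosyzygy: $\mho_1(M)=E_0(M)/M$, where $M\to E_0(M)$ is an injective envelope. *)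

theory Defs
  imports Main
begin

record ('q,'a) quiver =
  verts :: "'q set"
  arrs  :: "'a set"
  src   :: "'a \<Rightarrow> 'q"
  tgt   :: "'a \<Rightarrow> 'q"

text \<open>Paths are lists of arrows, composed left to right. A path from x (possibly trivial).\<close>
definition is_path :: "('q,'a) quiver \<Rightarrow> 'q \<Rightarrow> 'a list \<Rightarrow> bool" where
  "is_path Q x ps \<longleftrightarrow> x \<in> verts Q \<and> set ps \<subseteq> arrs Q
     \<and> (ps \<noteq> [] \<longrightarrow> src Q (hd ps) = x)
     \<and> (\<forall>i. Suc i < length ps \<longrightarrow> tgt Q (ps ! i) = src Q (ps ! Suc i))"

definition is_npath :: "('q,'a) quiver \<Rightarrow> 'a list \<Rightarrow> bool" where
  "is_npath Q ps \<longleftrightarrow> ps \<noteq> [] \<and> is_path Q (src Q (hd ps)) ps"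

definition path_vertex :: "('q,'a) quiver \<Rightarrow> 'q \<Rightarrow> 'a list \<Rightarrow> nat \<Rightarrow> 'q" where
  "path_vertex Q x ps i = (if i = 0 then x else tgt Q (ps ! (i - 1)))"

definition finite_quiver :: "('q,'a) quiver \<Rightarrow> bool" where
  "finite_quiver Q \<longleftrightarrow> finite (verts Q) \<and> finite (arrs Q) \<and> verts Q \<noteq> {}
     \<and> (\<forall>a\<in>arrs Q. src Q a \<in> verts Q \<and> tgt Q a \<in> verts Q)"

definition connected_quiver :: "('q,'a) quiver \<Rightarrow> bool" where
  "connected_quiver Q \<longleftrightarrow> (\<forall>x\<in>verts Q. \<forall>y\<in>verts Q.
     (x, y) \<in> ({(src Q a, tgt Q a) | a. a \<in> arrs Q} \<union> {(tgt Q a, src Q a) | a. a \<in> arrs Q})\<^sup>*)"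

text \<open>An admissible ideal generated by paths is spanned by the paths it contains;
  we represent it by this set R of (nonempty) paths, which is closed under
  composition with arbitrary paths on both sides.\<close>
definition admissible_monomial :: "('q,'a) quiver \<Rightarrow> 'a list set \<Rightarrow> bool" where
  "admissible_monomial Q R \<longleftrightarrow>
     R \<subseteq> {ps. is_npath Q ps \<and> 2 \<le> length ps}
     \<and> (\<forall>p\<in>R. \<forall>u w. is_npath Q (u @ p @ w) \<longrightarrow> u @ p @ w \<in> R)
     \<and> (\<exists>N. \<forall>ps. is_npath Q ps \<and> N \<le> length ps \<longrightarrow> ps \<in> R)"

definition string_algebra :: "('q,'a) quiver \<Rightarrow> 'a list set \<Rightarrow> bool" where
  "string_algebra Q R \<longleftrightarrow> finite_quiver Q \<and> connected_quiver Q \<and> admissible_monomial Q R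
     \<and> (\<forall>x\<in>verts Q. card {a\<in>arrs Q. src Q a = x} \<le> 2 \<and> card {a\<in>arrs Q. tgt Q a = x} \<le> 2)
     \<and> (\<forall>b\<in>arrs Q. card {g\<in>arrs Q. src Q g = tgt Q b \<and> [b, g] \<notin> R} \<le> 1)
     \<and> (\<forall>b\<in>arrs Q. card {a\<in>arrs Q. tgt Q a = src Q b \<and> [a, b] \<notin> R} \<le> 1)"

section \<open>Representations (= finite-dimensional right modules over kQ/I)\<close>

text \<open>The space at vertex x has coordinates indexed by the finite set bas V x;
  arrow a acts by the matrix mat V a (entry j i: from coordinate i at src to j at tgt).\<close>
record ('q,'a,'k) rep =
  bas :: "'q \<Rightarrow> nat set"
  mat :: "'a \<Rightarrow> nat \<Rightarrow> nat \<Rightarrow> 'k"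

definition space :: "('q,'a,'k::field) rep \<Rightarrow> 'q \<Rightarrow> (nat \<Rightarrow> 'k) set" where
  "space V x = {v. \<forall>i. i \<notin> bas V x \<longrightarrow> v i = 0}"

definition act :: "('q,'a) quiver \<Rightarrow> ('q,'a,'k::field) rep \<Rightarrow> 'a \<Rightarrow> (nat \<Rightarrow> 'k) \<Rightarrow> (nat \<Rightarrow> 'k)" where
  "act Q V a v = (\<lambda>j. if j \<in> bas V (tgt Q a) then (\<Sum>i\<in>bas V (src Q a). mat V a j i * v i) else 0)"

definition act_path :: "('q,'a) quiver \<Rightarrow> ('q,'a,'k::field) rep \<Rightarrow> 'a list \<Rightarrow> (nat \<Rightarrow> 'k) \<Rightarrow> (nat \<Rightarrow> 'k)" where
  "act_path Q V ps v = fold (act Q V) ps v"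

definition is_rep :: "('q,'a) quiver \<Rightarrow> 'a list set \<Rightarrow> ('q,'a,'k::field) rep \<Rightarrow> bool" where
  "is_rep Q R V \<longleftrightarrow> (\<forall>x. finite (bas V x)) \<and> (\<forall>x. x \<notin> verts Q \<longrightarrow> bas V x = {})
     \<and> (\<forall>p\<in>R. \<forall>v\<in>space V (src Q (hd p)). act_path Q V p v = (\<lambda>_. 0))"

definition app :: "('q,'a,'k::field) rep \<Rightarrow> ('q,'a,'k) rep \<Rightarrow> ('q \<Rightarrow> nat \<Rightarrow> nat \<Rightarrow> 'k)
    \<Rightarrow> 'q \<Rightarrow> (nat \<Rightarrow> 'k) \<Rightarrow> (nat \<Rightarrow> 'k)" where
  "app V W F x v = (\<lambda>j. if j \<in> bas W x then (\<Sum>i\<in>bas V x. F x j i * v i) else 0)"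

definition is_hom :: "('q,'a) quiver \<Rightarrow> ('q,'a,'k::field) rep \<Rightarrow> ('q,'a,'k) rep
    \<Rightarrow> ('q \<Rightarrow> nat \<Rightarrow> nat \<Rightarrow> 'k) \<Rightarrow> bool" where
  "is_hom Q V W F \<longleftrightarrow> (\<forall>a\<in>arrs Q. \<forall>v\<in>space V (src Q a).
     app V W F (tgt Q a) (act Q V a v) = act Q W a (app V W F (src Q a) v))"

definition hom_mono :: "('q,'a) quiver \<Rightarrow> ('q,'a,'k::field) rep \<Rightarrow> ('q,'a,'k) rep
    \<Rightarrow> ('q \<Rightarrow> nat \<Rightarrow> nat \<Rightarrow> 'k) \<Rightarrow> bool" where
  "hom_mono Q V W F \<longleftrightarrow> (\<forall>x\<in>verts Q. inj_on (app V W F x) (space V x))"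

definition hom_epi :: "('q,'a) quiver \<Rightarrow> ('q,'a,'k::field) rep \<Rightarrow> ('q,'a,'k) rep
    \<Rightarrow> ('q \<Rightarrow> nat \<Rightarrow> nat \<Rightarrow> 'k) \<Rightarrow> bool" where
  "hom_epi Q V W F \<longleftrightarrow> (\<forall>x\<in>verts Q. app V W F x ` space V x = space W x)"

definition isomorphic :: "('q,'a) quiver \<Rightarrow> ('q,'a,'k::field) rep \<Rightarrow> ('q,'a,'k) rep \<Rightarrow> bool" where
  "isomorphic Q V W \<longleftrightarrow> (\<exists>F. is_hom Q V W F \<and> hom_mono Q V W F \<and> hom_epi Q V W F)"

definition zero_rep :: "('q,'a) quiver \<Rightarrow> ('q,'a,'k::field) rep \<Rightarrow> bool" where
  "zero_rep Q V \<longleftrightarrow> (\<forall>x\<in>verts Q. bas V x = {})"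

definition dsum :: "('q,'a,'k::field) rep \<Rightarrow> ('q,'a,'k) rep \<Rightarrow> ('q,'a,'k) rep" where
  "dsum V W = \<lparr> bas = (\<lambda>x. (\<lambda>i. 2 * i) ` bas V x \<union> (\<lambda>i. 2 * i + 1) ` bas W x),
                mat = (\<lambda>a j i. if even j \<and> even i then mat V a (j div 2) (i div 2)
                              else if odd j \<and> odd i then mat W a (j div 2) (i div 2) else 0) \<rparr>"

definition injective_rep :: "('q,'a) quiver \<Rightarrow> 'a list set \<Rightarrow> ('q,'a,'k::field) rep \<Rightarrow> bool" where
  "injective_rep Q R E \<longleftrightarrow> is_rep Q R E \<and>
     (\<forall>X Y f g. is_rep Q R X \<and> is_rep Q R Y \<and> is_hom Q X Y f \<and> hom_mono Q X Y f \<and> is_hom Q X E g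
        \<longrightarrow> (\<exists>h. is_hom Q Y E h \<and>
               (\<forall>x\<in>verts Q. \<forall>v\<in>space X x. app Y E h x (app X Y f x v) = app X E g x v)))"

definition subrep :: "('q,'a) quiver \<Rightarrow> ('q,'a,'k::field) rep \<Rightarrow> ('q \<Rightarrow> (nat \<Rightarrow> 'k) set) \<Rightarrow> bool" where
  "subrep Q E U \<longleftrightarrow> (\<forall>x\<in>verts Q. U x \<subseteq> space E x \<and> (\<lambda>_. 0) \<in> U x
       \<and> (\<forall>u\<in>U x. \<forall>w\<in>U x. (\<lambda>i. u i + w i) \<in> U x)
       \<and> (\<forall>c. \<forall>u\<in>U x. (\<lambda>i. c * u i) \<in> U x))
     \<and> (\<forall>a\<in>arrs Q. \<forall>u\<in>U (src Q a). act Q E a u \<in> U (tgt Q a))"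

definition essential_mono :: "('q,'a) quiver \<Rightarrow> ('q,'a,'k::field) rep \<Rightarrow> ('q,'a,'k) rep
    \<Rightarrow> ('q \<Rightarrow> nat \<Rightarrow> nat \<Rightarrow> 'k) \<Rightarrow> bool" where
  "essential_mono Q M E i \<longleftrightarrow> is_hom Q M E i \<and> hom_mono Q M E i \<and>
     (\<forall>U. subrep Q E U \<and> (\<exists>x\<in>verts Q. \<exists>u\<in>U x. u \<noteq> (\<lambda>_. 0)) \<longrightarrow>
        (\<exists>x\<in>verts Q. \<exists>u\<in>U x. u \<noteq> (\<lambda>_. 0) \<and> u \<in> app M E i x ` space M x))"

definition injective_envelope :: "('q,'a) quiver \<Rightarrow> 'a list set \<Rightarrow> ('q,'a,'k::field) rep
    \<Rightarrow> ('q,'a,'k) rep \<Rightarrow> ('q \<Rightarrow> nat \<Rightarrow> nat \<Rightarrow> 'k) \<Rightarrow> bool" where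
  "injective_envelope Q R M E i \<longleftrightarrow> injective_rep Q R E \<and> essential_mono Q M E i"

definition string_rep :: "('q,'a) quiver \<Rightarrow> 'q \<Rightarrow> 'a list \<Rightarrow> ('q,'a,'k::field) rep" where
  "string_rep Q x ps = \<lparr> bas = (\<lambda>y. {i. i \<le> length ps \<and> path_vertex Q x ps i = y}),
     mat = (\<lambda>a j i. if i < length ps \<and> ps ! i = a \<and> j = Suc i then 1 else 0) \<rparr>"

definition directed_string_module :: "('q,'a) quiver \<Rightarrow> 'a list set \<Rightarrow> ('q,'a,'k::field) rep \<Rightarrow> bool" where
  "directed_string_module Q R D \<longleftrightarrow>
     (\<exists>x ps. is_path Q x ps \<and> ps \<notin> R \<and> isomorphic Q D (string_rep Q x ps))"

end

theory Submission
  imports Defs "HOL-Library.Function_Algebras" "HOL.Vector_Spaces"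
begin


definition ev :: "nat \<Rightarrow> nat \<Rightarrow> 'k::field" where "ev l = (\<lambda>j. if j = l then 1 else 0)"

lemma app_in_space: "app V W F x v \<in> space W x"
  by (simp add: app_def space_def)

lemma act_in_space: "act Q V a v \<in> space V (tgt Q a)"
  by (simp add: act_def space_def)

lemma app_out: "j \<notin> bas W x \<Longrightarrow> app V W F x v j = 0"
  by (simp add: app_def)

lemma act_out: "j \<notin> bas V (tgt Q a) \<Longrightarrow> act Q V a v j = 0"
  by (simp add: act_def)

lemma space_zero: "(\<lambda>_. 0) \<in> space V x" by (simp add: space_def)
lemma space_add: "u \<in> space V x \<Longrightarrow> w \<in> space V x \<Longrightarrow> (\<lambda>i. u i + w i) \<in> space V x"
  by (simp add: space_def)
lemma space_diff: "u \<in> space V x \<Longrightarrow> w \<in> space V x \<Longrightarrow> (\<lambda>i. u i - w i) \<in> space V x"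
  by (simp add: space_def)
lemma space_scale: "u \<in> space V x \<Longrightarrow> (\<lambda>i. c * u i) \<in> space V x"
  by (simp add: space_def)
lemma space_sum: "(\<And>l. l \<in> L \<Longrightarrow> f l \<in> space V x) \<Longrightarrow> (\<lambda>i. \<Sum>l\<in>L. f l i) \<in> space V x"
  by (simp add: space_def)
lemma space_ev: "l \<in> bas V x \<Longrightarrow> ev l \<in> space V x"
  by (auto simp add: space_def ev_def)

lemma app_sum: "app V W F x (\<lambda>i. \<Sum>l\<in>L. f l i) = (\<lambda>j. \<Sum>l\<in>L. app V W F x (f l) j)"
  by (auto simp add: app_def fun_eq_iff sum_distrib_left intro: sum.swap)

lemma app_add: "app V W F x (\<lambda>i. u i + w i) = (\<lambda>j. app V W F x u j + app V W F x w j)"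
  by (auto simp add: app_def fun_eq_iff distrib_left sum.distrib)

lemma app_diff: "app V W F x (\<lambda>i. u i - w i) = (\<lambda>j. app V W F x u j - app V W F x w j)"
  by (auto simp add: app_def fun_eq_iff right_diff_distrib sum_subtractf)

lemma app_scale: "app V W F x (\<lambda>i. c * u i) = (\<lambda>j. c * app V W F x u j)"
  by (auto simp add: app_def fun_eq_iff sum_distrib_left algebra_simps)

lemma app_zero: "app V W F x (\<lambda>_. 0) = (\<lambda>_. 0)"
  by (auto simp add: app_def fun_eq_iff)

lemma app_sum_scale: "app V W F x (\<lambda>i. \<Sum>l\<in>L. c l * f l i) = (\<lambda>j. \<Sum>l\<in>L. c l * app V W F x (f l) j)"
  by (simp add: app_sum app_scale)

lemma act_sum: "act Q V a (\<lambda>i. \<Sum>l\<in>L. f l i) = (\<lambda>j. \<Sum>l\<in>L. act Q V a (f l) j)"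
  by (auto simp add: act_def fun_eq_iff sum_distrib_left intro: sum.swap)

lemma act_scale: "act Q V a (\<lambda>i. c * u i) = (\<lambda>j. c * act Q V a u j)"
  by (auto simp add: act_def fun_eq_iff sum_distrib_left algebra_simps)

lemma act_add: "act Q V a (\<lambda>i. u i + w i) = (\<lambda>j. act Q V a u j + act Q V a w j)"
  by (auto simp add: act_def fun_eq_iff distrib_left sum.distrib)

lemma act_zero: "act Q V a (\<lambda>_. 0) = (\<lambda>_. 0)"
  by (auto simp add: act_def fun_eq_iff)

lemma act_path_Nil[simp]: "act_path Q V [] v = v" by (simp add: act_path_def)
lemma act_path_Cons[simp]: "act_path Q V (a # p) v = act_path Q V p (act Q V a v)"
  by (simp add: act_path_def)
lemma act_path_snoc: "act_path Q V (p @ [a]) v = act Q V a (act_path Q V p v)"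
  by (simp add: act_path_def)

lemma act_path_sum: "act_path Q V p (\<lambda>i. \<Sum>l\<in>L. f l i) = (\<lambda>j. \<Sum>l\<in>L. act_path Q V p (f l) j)"
proof (induction p arbitrary: f)
  case Nil then show ?case by simp
next
  case (Cons a p) then show ?case by (simp add: act_sum)
qed

lemma act_path_scale: "act_path Q V p (\<lambda>i. c * u i) = (\<lambda>j. c * act_path Q V p u j)"
  by (induction p arbitrary: u) (simp_all add: act_scale)

lemma act_path_add: "act_path Q V p (\<lambda>i. u i + w i) = (\<lambda>j. act_path Q V p u j + act_path Q V p w j)"
  by (induction p arbitrary: u w) (simp_all add: act_add)

lemma act_path_zero: "act_path Q V p (\<lambda>_. 0) = (\<lambda>_. 0)"
  by (induction p) (simp_all add: act_zero)

lemma expand: "finite (bas V x) \<Longrightarrow> v \<in> space V x \<Longrightarrow> v = (\<lambda>j. \<Sum>l\<in>bas V x. v l * ev l j)"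
  unfolding space_def ev_def
  by (auto simp: fun_eq_iff if_distrib sum.delta cong: if_cong)

lemma app_comp: "app W U G x (app V W F x v) = app V U (\<lambda>x k i. \<Sum>j\<in>bas W x. G x k j * F x j i) x v"
  by (auto simp add: app_def fun_eq_iff sum_distrib_left sum_distrib_right mult.assoc intro: sum.swap)


definition pend :: "('q,'a) quiver \<Rightarrow> 'q \<Rightarrow> 'a list \<Rightarrow> 'q" where
  "pend Q x p = (if p = [] then x else tgt Q (last p))"

lemma pend_Nil[simp]: "pend Q x [] = x" by (simp add: pend_def)
lemma pend_Cons[simp]: "pend Q x (a # p) = pend Q (tgt Q a) p" by (simp add: pend_def)
lemma pend_append[simp]: "pend Q x (p @ q) = pend Q (pend Q x p) q"
  by (induction p arbitrary: x) auto

lemma is_path_Nil[simp]: "is_path Q x [] \<longleftrightarrow> x \<in> verts Q" by (simp add: is_path_def)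

locale sa =
  fixes Q :: "('q,'a) quiver" and R :: "'a list set"
  assumes SA: "string_algebra Q R"
begin

lemma fq: "finite_quiver Q" using SA by (simp add: string_algebra_def)
lemma adm: "admissible_monomial Q R" using SA by (simp add: string_algebra_def)
lemma src_v: "a \<in> arrs Q \<Longrightarrow> src Q a \<in> verts Q" using fq by (simp add: finite_quiver_def)
lemma tgt_v: "a \<in> arrs Q \<Longrightarrow> tgt Q a \<in> verts Q" using fq by (simp add: finite_quiver_def)
lemma fin_arrs: "finite (arrs Q)" using fq by (simp add: finite_quiver_def)

lemma is_path_Cons: "is_path Q x (a # p) \<longleftrightarrow> x \<in> verts Q \<and> a \<in> arrs Q \<and> src Q a = x \<and> is_path Q (tgt Q a) p"
proof
  assume H: "is_path Q x (a # p)"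
  have "\<forall>i. Suc i < length p \<longrightarrow> tgt Q (p ! i) = src Q (p ! Suc i)"
  proof (intro allI impI)
    fix i assume "Suc i < length p"
    with H have "tgt Q ((a#p) ! Suc i) = src Q ((a#p) ! Suc (Suc i))" unfolding is_path_def by auto
    then show "tgt Q (p ! i) = src Q (p ! Suc i)" by simp
  qed
  moreover have "p \<noteq> [] \<longrightarrow> src Q (hd p) = tgt Q a"
  proof
    assume "p \<noteq> []"
    with H have "tgt Q ((a#p) ! 0) = src Q ((a#p) ! Suc 0)" unfolding is_path_def by auto
    with \<open>p \<noteq> []\<close> show "src Q (hd p) = tgt Q a" by (simp add: hd_conv_nth)
  qed
  ultimately show "x \<in> verts Q \<and> a \<in> arrs Q \<and> src Q a = x \<and> is_path Q (tgt Q a) p"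
    using H tgt_v unfolding is_path_def by auto
next
  assume H: "x \<in> verts Q \<and> a \<in> arrs Q \<and> src Q a = x \<and> is_path Q (tgt Q a) p"
  have "\<forall>i. Suc i < length (a#p) \<longrightarrow> tgt Q ((a#p) ! i) = src Q ((a#p) ! Suc i)"
  proof (intro allI impI)
    fix i assume i: "Suc i < length (a#p)"
    show "tgt Q ((a#p) ! i) = src Q ((a#p) ! Suc i)"
    proof (cases i)
      case 0 then show ?thesis using H i unfolding is_path_def by (auto simp: hd_conv_nth)
    next
      case (Suc j) then show ?thesis using H i unfolding is_path_def by auto
    qed
  qed
  then show "is_path Q x (a # p)" using H unfolding is_path_def by auto
qed

lemma is_path_append: "is_path Q x (p @ q) \<longleftrightarrow> is_path Q x p \<and> is_path Q (pend Q x p) q"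
proof (induction p arbitrary: x)
  case Nil
  show ?case
  proof
    assume "is_path Q x ([] @ q)" then show "is_path Q x [] \<and> is_path Q (pend Q x []) q"
      by (cases q) (auto simp: is_path_Cons)
  qed auto
next
  case (Cons a p) then show ?case by (auto simp: is_path_Cons)
qed

lemma is_path_v: "is_path Q x p \<Longrightarrow> x \<in> verts Q" by (simp add: is_path_def)
lemma is_path_pend_v: "is_path Q x p \<Longrightarrow> pend Q x p \<in> verts Q"
  by (induction p arbitrary: x) (auto simp: is_path_Cons)

lemma is_npath_iff: "is_npath Q p \<longleftrightarrow> p \<noteq> [] \<and> is_path Q (src Q (hd p)) p"
  by (simp add: is_npath_def)

lemma R_npath: "p \<in> R \<Longrightarrow> is_npath Q p \<and> 2 \<le> length p"
  using adm by (auto simp: admissible_monomial_def)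

lemma R_close: "p \<in> R \<Longrightarrow> is_npath Q (u @ p @ w) \<Longrightarrow> u @ p @ w \<in> R"
  using adm by (auto simp: admissible_monomial_def)

lemma R_long: "\<exists>N. \<forall>ps. is_npath Q ps \<and> N \<le> length ps \<longrightarrow> ps \<in> R"
  using adm by (auto simp: admissible_monomial_def)

lemma R_nonempty: "p \<in> R \<Longrightarrow> p \<noteq> []" using R_npath by (auto simp: is_npath_def)

lemma notR_sub: "u @ p @ w \<notin> R \<Longrightarrow> is_npath Q (u @ p @ w) \<Longrightarrow> p \<notin> R"
  using R_close by blast

lemma path_npath: "is_path Q x p \<Longrightarrow> p \<noteq> [] \<Longrightarrow> is_npath Q p"
  by (cases p) (auto simp: is_npath_def is_path_Cons)

lemma path_take: "is_path Q x p \<Longrightarrow> is_path Q x (take k p)"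
  using is_path_append[of x "take k p" "drop k p"] by simp

lemma path_drop: "is_path Q x p \<Longrightarrow> is_path Q (pend Q x (take k p)) (drop k p)"
  using is_path_append[of x "take k p" "drop k p"] by simp

lemma path_vertex_pend: "k \<le> length p \<Longrightarrow> path_vertex Q x p k = pend Q x (take k p)"
  by (cases k) (auto simp: path_vertex_def pend_def take_Suc_conv_app_nth)

lemma path_src_nth: "is_path Q x p \<Longrightarrow> k < length p \<Longrightarrow> src Q (p ! k) = path_vertex Q x p k"
proof -
  assume H: "is_path Q x p" "k < length p"
  have "is_path Q (pend Q x (take k p)) (drop k p)" using path_drop[OF H(1)] .
  moreover have "drop k p = p ! k # drop (Suc k) p" using H(2) by (simp add: Cons_nth_drop_Suc)
  ultimately show ?thesis using H(2) by (simp add: is_path_Cons path_vertex_pend)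
qed

lemma path_vertex_v: "is_path Q x p \<Longrightarrow> k \<le> length p \<Longrightarrow> path_vertex Q x p k \<in> verts Q"
  by (simp add: path_vertex_pend is_path_pend_v path_take)

end


lemma sr_bas: "bas (string_rep Q x p) z = {i. i \<le> length p \<and> path_vertex Q x p i = z}"
  by (simp add: string_rep_def)

lemma sr_fin: "finite (bas (string_rep Q x p) z)"
  by (simp add: sr_bas)

lemma sr_act_gen:
  fixes u :: "nat \<Rightarrow> 'k::field" and Q :: "('q,'a) quiver"
  shows "act Q (string_rep Q x p) a u k = (if path_vertex Q x p k = tgt Q a \<and> 0 < k \<and> k \<le> length p \<and> p!(k-1) = a \<and> path_vertex Q x p (k - 1) = src Q a then u (k-1) else 0)"
proof -
  let ?V = "string_rep Q x p :: ('q,'a,'k) rep"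
  let ?B = "bas ?V (src Q a)"
  define c where "c = (if 0 < k \<and> k \<le> length p \<and> p!(k-1) = a then u (k-1) else 0)"
  have "(\<Sum>i\<in>?B. mat ?V a k i * u i) = (\<Sum>i\<in>?B. if i = k - 1 then c else 0)"
    by (rule sum.cong) (auto simp: string_rep_def c_def)
  also have "\<dots> = (if k - 1 \<in> ?B then c else 0)"
    by (simp add: sum.delta sr_fin)
  finally have Sm: "(\<Sum>i\<in>?B. mat ?V a k i * u i) = (if k - 1 \<in> ?B then c else 0)" .
  show ?thesis unfolding act_def Sm by (auto simp add: c_def sr_bas)
qed

context sa begin

lemma sr_act: "is_path Q x p \<Longrightarrow> act Q (string_rep Q x p) a u k = (if 0 < k \<and> k \<le> length p \<and> p!(k-1) = a then u (k-1) else 0)"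
proof -
  assume P: "is_path Q x p"
  have "path_vertex Q x p k = tgt Q a \<and> 0 < k \<and> k \<le> length p \<and> p!(k-1) = a \<and> path_vertex Q x p (k - 1) = src Q a
     \<longleftrightarrow> 0 < k \<and> k \<le> length p \<and> p!(k-1) = a"
    using path_src_nth[OF P, of "k-1"] by (cases k; cases p) (auto simp: sr_bas path_vertex_def)
  then show ?thesis by (simp add: sr_act_gen)
qed

lemma sr_act_path_nz: "is_path Q x p \<Longrightarrow> u \<in> space (string_rep Q x p) z \<Longrightarrow> act_path Q (string_rep Q x p) r u k \<noteq> 0 \<Longrightarrow>
   length r \<le> k \<and> k \<le> length p \<and> take (length r) (drop (k - length r) p) = r"
proof (induction r arbitrary: k rule: rev_induct)
  case Nil
  then show ?case by (auto simp: space_def sr_bas)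
next
  case (snoc a r)
  from snoc.prems have nz: "act Q (string_rep Q x p) a (act_path Q (string_rep Q x p) r u) k \<noteq> 0"
    by (simp add: act_path_snoc)
  have k: "0 < k" "k \<le> length p" "p!(k-1) = a" and nz2: "act_path Q (string_rep Q x p) r u (k-1) \<noteq> 0"
    using nz unfolding sr_act[OF snoc.prems(1)] by (auto split: if_splits)
  from snoc.IH[OF snoc.prems(1,2) nz2] have IH: "length r \<le> k - 1" "take (length r) (drop (k - 1 - length r) p) = r"
    by auto
  define s where "s = k - 1 - length r"
  have ks: "k - length (r @ [a]) = s" using IH k by (simp add: s_def)
  have sl: "length r < length (drop s p)" using IH k by (simp add: s_def)
  have "take (length (r @ [a])) (drop s p) = take (length r) (drop s p) @ [drop s p ! length r]"
    using sl by (simp add: take_Suc_conv_app_nth)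
  also have "drop s p ! length r = p ! (k - 1)" using IH k sl by (simp add: s_def)
  finally show ?case using IH k ks by (simp add: s_def)
qed

lemma sr_is_rep:
  assumes P: "is_path Q x p" and NR: "p \<notin> R"
  shows "is_rep Q R (string_rep Q x p)"
proof -
  have "\<forall>z. z \<notin> verts Q \<longrightarrow> bas (string_rep Q x p) z = {}"
    using path_vertex_v[OF P] by (auto simp: sr_bas)
  moreover have "\<forall>r\<in>R. \<forall>v\<in>space (string_rep Q x p) (src Q (hd r)). act_path Q (string_rep Q x p) r v = (\<lambda>_. 0)"
  proof (intro ballI)
    fix r v assume r: "r \<in> R" and v: "v \<in> space (string_rep Q x p) (src Q (hd r))"
    show "act_path Q (string_rep Q x p) r v = (\<lambda>_. 0)"
    proof (rule ccontr)
      assume "act_path Q (string_rep Q x p) r v \<noteq> (\<lambda>_. 0)"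
      then obtain k where "act_path Q (string_rep Q x p) r v k \<noteq> 0" by auto
      from sr_act_path_nz[OF P v this] have H: "length r \<le> k" "k \<le> length p"
        "take (length r) (drop (k - length r) p) = r" by auto
      define s where "s = k - length r"
      have eq: "p = take s p @ r @ drop (s + length r) p"
        using H by (metis append_take_drop_id drop_drop add.commute s_def)
      have "p \<noteq> []" using R_nonempty[OF r] H by auto
      then have "is_npath Q p" using path_npath[OF P] by auto
      then have "p \<in> R" using R_close[OF r, of "take s p" "drop (s + length r) p"] eq by simp
      with NR show False by simp
    qed
  qed
  ultimately show ?thesis by (auto simp: is_rep_def sr_fin)
qed

end

definition zrep :: "('q,'a,'k::field) rep" where "zrep = \<lparr> bas = (\<lambda>_. {}), mat = (\<lambda>_ _ _. 0) \<rparr>"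

lemma zrep_is_rep: "\<forall>r\<in>R. r \<noteq> [] \<Longrightarrow> is_rep Q R (zrep :: ('q,'a,'k::field) rep)"
  unfolding is_rep_def
proof (intro conjI ballI allI impI)
  fix r :: "'a list" and v assume "r \<in> R" "\<forall>r\<in>R. r \<noteq> []"
  then obtain a r' where "r = a # r'" by (cases r) auto
  moreover have "act Q (zrep :: ('q,'a,'k) rep) a v = (\<lambda>_. 0)" by (simp add: act_def zrep_def)
  ultimately show "act_path Q (zrep :: ('q,'a,'k) rep) r v = (\<lambda>_. 0)" by (simp add: act_path_zero)
qed (auto simp: zrep_def)

lemma zrep_zero: "zero_rep Q zrep" by (simp add: zero_rep_def zrep_def)

lemma iso_refl:
  fixes V :: "('q,'a,'k::field) rep"
  assumes "\<forall>x. finite (bas V x)"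
  shows "isomorphic Q V V"
proof -
  let ?F = "\<lambda>(x::'q) (j::nat) (i::nat). if j = i then (1::'k) else 0"
  have A: "\<And>x v. v \<in> space V x \<Longrightarrow> app V V ?F x v = v"
  proof -
    fix x v assume v: "v \<in> space V x"
    have "\<And>j. (\<Sum>i\<in>bas V x. ?F x j i * v i) = (\<Sum>i\<in>bas V x. if i = j then v j else 0)"
      by (rule sum.cong) auto
    then show "app V V ?F x v = v" using v assms by (auto simp: app_def space_def fun_eq_iff sum.delta)
  qed
  have "is_hom Q V V ?F" unfolding is_hom_def using A act_in_space by metis
  moreover have "hom_mono Q V V ?F" unfolding hom_mono_def using A by (simp add: inj_on_def)
  moreover have "hom_epi Q V V ?F" unfolding hom_epi_def using A by (auto simp: image_def)
  ultimately show ?thesis unfolding isomorphic_def by blast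
qed

lemma dsum_bas: "bas (dsum V W) x = (\<lambda>i. 2 * i) ` bas V x \<union> (\<lambda>i. 2 * i + 1) ` bas W x"
  by (simp add: dsum_def)

lemma dsum_act_even:
  fixes u :: "nat \<Rightarrow> 'k::field"
  assumes "finite (bas V (src Q a))" "finite (bas W (src Q a))"
  shows "act Q (dsum V W) a u (2 * k) = act Q V a (\<lambda>k'. u (2 * k')) k"
proof -
  let ?E = "(\<lambda>i. 2 * i) ` bas V (src Q a)" and ?O = "(\<lambda>i. 2 * i + 1) ` bas W (src Q a)"
  have d: "?E \<inter> ?O = {}" by auto presburger
  have "(\<Sum>i\<in>?E \<union> ?O. mat (dsum V W) a (2*k) i * u i) = (\<Sum>i\<in>?E. mat (dsum V W) a (2*k) i * u i) + (\<Sum>i\<in>?O. mat (dsum V W) a (2*k) i * u i)"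
    using assms d by (simp add: sum.union_disjoint)
  also have "(\<Sum>i\<in>?O. mat (dsum V W) a (2*k) i * u i) = 0"
    by (rule sum.neutral) (auto simp: dsum_def)
  also have "(\<Sum>i\<in>?E. mat (dsum V W) a (2*k) i * u i) = (\<Sum>i\<in>bas V (src Q a). mat V a k i * u (2 * i))"
    by (subst sum.reindex) (auto simp: inj_on_def dsum_def)
  finally have S: "(\<Sum>i\<in>bas (dsum V W) (src Q a). mat (dsum V W) a (2*k) i * u i) = (\<Sum>i\<in>bas V (src Q a). mat V a k i * u (2 * i))"
    by (simp add: dsum_bas)
  have "2 * k \<in> bas (dsum V W) (tgt Q a) \<longleftrightarrow> k \<in> bas V (tgt Q a)"
    by (auto simp: dsum_bas) presburger
  then show ?thesis using S by (simp add: act_def)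
qed

lemma dsum_act_odd:
  fixes u :: "nat \<Rightarrow> 'k::field"
  assumes "finite (bas V (src Q a))" "finite (bas W (src Q a))"
  shows "act Q (dsum V W) a u (2 * k + 1) = act Q W a (\<lambda>k'. u (2 * k' + 1)) k"
proof -
  let ?E = "(\<lambda>i. 2 * i) ` bas V (src Q a)" and ?O = "(\<lambda>i. 2 * i + 1) ` bas W (src Q a)"
  have d: "?E \<inter> ?O = {}" by auto presburger
  have "(\<Sum>i\<in>?E \<union> ?O. mat (dsum V W) a (2*k+1) i * u i) = (\<Sum>i\<in>?E. mat (dsum V W) a (2*k+1) i * u i) + (\<Sum>i\<in>?O. mat (dsum V W) a (2*k+1) i * u i)"
    using assms d by (simp add: sum.union_disjoint)
  also have "(\<Sum>i\<in>?E. mat (dsum V W) a (2*k+1) i * u i) = 0"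
    by (rule sum.neutral) (auto simp: dsum_def)
  also have "(\<Sum>i\<in>?O. mat (dsum V W) a (2*k+1) i * u i) = (\<Sum>i\<in>bas W (src Q a). mat W a k i * u (2 * i + 1))"
    by (subst sum.reindex) (auto simp: inj_on_def dsum_def)
  finally have S: "(\<Sum>i\<in>bas (dsum V W) (src Q a). mat (dsum V W) a (2*k+1) i * u i) = (\<Sum>i\<in>bas W (src Q a). mat W a k i * u (2 * i + 1))"
    by (simp add: dsum_bas)
  have "2 * k + 1 \<in> bas (dsum V W) (tgt Q a) \<longleftrightarrow> k \<in> bas W (tgt Q a)"
    by (auto simp: dsum_bas) presburger
  then show ?thesis using S by (simp add: act_def)
qed


context sa begin

definition Pset :: "'q \<Rightarrow> 'a list set" where
  "Pset y = {q. q = [] \<or> (is_npath Q q \<and> tgt Q (last q) = y \<and> q \<notin> R)}"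

definition pstart :: "'q \<Rightarrow> 'a list \<Rightarrow> 'q" where
  "pstart y q = (if q = [] then y else src Q (hd q))"

lemma Nil_P[simp]: "[] \<in> Pset y" by (simp add: Pset_def)
lemma pstart_Nil[simp]: "pstart y [] = y" by (simp add: pstart_def)
lemma pstart_Cons[simp]: "pstart y (a # q) = src Q a" by (simp add: pstart_def)

lemma npath_Cons: "is_npath Q (a # q) \<longleftrightarrow> a \<in> arrs Q \<and> src Q a \<in> verts Q \<and> (q = [] \<or> is_npath Q q \<and> src Q (hd q) = tgt Q a)"
  by (cases q) (auto simp: is_npath_def is_path_Cons tgt_v)

lemma P_Cons: "a # q \<in> Pset y \<Longrightarrow> q \<in> Pset y \<and> a \<in> arrs Q \<and> pstart y q = tgt Q a"
proof -
  assume H: "a # q \<in> Pset y"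
  then have np: "is_npath Q (a # q)" and t: "tgt Q (last (a#q)) = y" and nr: "a # q \<notin> R"
    by (auto simp: Pset_def)
  show ?thesis
  proof (cases q)
    case Nil then show ?thesis using np t by (simp add: npath_Cons)
  next
    case (Cons b q')
    have "q \<notin> R" using notR_sub[of "[a]" q "[]"] nr np by auto
    then show ?thesis using np t Cons by (auto simp: npath_Cons Pset_def)
  qed
qed

lemma P_drop: "q \<in> Pset y \<Longrightarrow> drop k q \<in> Pset y"
proof (induction k arbitrary: q)
  case 0 then show ?case by simp
next
  case (Suc k)
  show ?case
  proof (cases q)
    case Nil then show ?thesis by simp
  next
    case (Cons a q')
    then have "q' \<in> Pset y" using P_Cons Suc.prems by blast
    then show ?thesis using Suc.IH Cons by simp
  qed
qed

lemma P_app: "r @ q \<in> Pset y \<Longrightarrow> q \<in> Pset y"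
  using P_drop[of "r @ q" y "length r"] by simp

lemma P_mk: "a \<in> arrs Q \<Longrightarrow> q \<in> Pset y \<Longrightarrow> pstart y q = tgt Q a \<Longrightarrow> a # q \<notin> Pset y \<Longrightarrow> a # q \<in> R"
proof -
  assume a: "a \<in> arrs Q" and q: "q \<in> Pset y" and s: "pstart y q = tgt Q a" and n: "a # q \<notin> Pset y"
  have "is_npath Q (a # q)" using a q s src_v
    by (cases q) (auto simp: npath_Cons Pset_def pstart_def)
  moreover have "tgt Q (last (a # q)) = y" using q s by (cases q) (auto simp: Pset_def pstart_def)
  ultimately show ?thesis using n by (auto simp: Pset_def)
qed

lemma P_uniq: "q \<noteq> [] \<Longrightarrow> a # q \<in> Pset y \<Longrightarrow> b # q \<in> Pset y \<Longrightarrow> a = b"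
proof -
  assume q: "q \<noteq> []" and A: "a # q \<in> Pset y" and B: "b # q \<in> Pset y"
  let ?c = "hd q"
  have hq: "q = ?c # tl q" using q by simp
  have fin: "finite {g\<in>arrs Q. tgt Q g = src Q ?c \<and> [g, ?c] \<notin> R}" using fin_arrs by simp
  have "?c \<in> arrs Q" using P_Cons[OF A] q by (cases q) (auto simp: Pset_def is_npath_def is_path_Cons)
  then have card: "card {g\<in>arrs Q. tgt Q g = src Q ?c \<and> [g, ?c] \<notin> R} \<le> 1"
    using SA by (auto simp: string_algebra_def)
  have mem: "g \<in> {g\<in>arrs Q. tgt Q g = src Q ?c \<and> [g, ?c] \<notin> R}" if G: "g # q \<in> Pset y" for g
  proof -
    have np: "is_npath Q (g # q)" and nr: "g # q \<notin> R" using G by (auto simp: Pset_def)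
    have "[g, ?c] \<notin> R" using notR_sub[of "[]" "[g, ?c]" "tl q"] np nr hq by (metis append.left_neutral append_Cons append_Nil)
    moreover have "tgt Q g = src Q ?c" using P_Cons[OF G] q by (simp add: pstart_def)
    ultimately show ?thesis using P_Cons[OF G] by simp
  qed
  show "a = b" using card fin mem[OF A] mem[OF B] card_le_Suc0_iff_eq[OF fin] by auto
qed

lemma P_path: "y \<in> verts Q \<Longrightarrow> q \<in> Pset y \<Longrightarrow> is_path Q (pstart y q) q \<and> pend Q (pstart y q) q = y"
  by (cases q) (auto simp: Pset_def is_npath_def pstart_def pend_def)

lemma P_fin: "finite (Pset y)"
proof -
  obtain N where N: "\<forall>ps. is_npath Q ps \<and> N \<le> length ps \<longrightarrow> ps \<in> R" using R_long by blast
  have "Pset y \<subseteq> {xs. set xs \<subseteq> arrs Q \<and> length xs \<le> N}"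
  proof
    fix q assume q: "q \<in> Pset y"
    show "q \<in> {xs. set xs \<subseteq> arrs Q \<and> length xs \<le> N}"
    proof (cases "q = []")
      case False
      then have "is_npath Q q" "q \<notin> R" using q by (auto simp: Pset_def)
      then show ?thesis using N by (auto simp: is_npath_def is_path_def not_le dest: spec[of _ q])
    qed simp
  qed
  then show ?thesis using finite_lists_length_le[OF fin_arrs] finite_subset by blast
qed

end

locale env = sa Q R for Q :: "('q,'a) quiver" and R +
  fixes y :: 'q and idx :: "'a list \<Rightarrow> nat" and kk :: "'k::field"
  assumes yv: "y \<in> verts Q" and inj: "inj_on idx (Pset y)"
begin

abbreviation P where "P \<equiv> Pset y"
abbreviation ps where "ps \<equiv> pstart y"

definition J :: "('q,'a,'k) rep" where
  "J = \<lparr> bas = (\<lambda>z. idx ` {q\<in>P. ps q = z}),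
         mat = (\<lambda>a j i. if \<exists>q\<in>P. \<exists>q'\<in>P. i = idx q \<and> j = idx q' \<and> q = a # q' then 1 else 0) \<rparr>"

lemma J_bas: "bas J z = idx ` {q\<in>P. ps q = z}" by (simp add: J_def)

lemma J_fin: "finite (bas J z)" using P_fin by (simp add: J_bas)

lemma idx_eq: "q \<in> P \<Longrightarrow> q' \<in> P \<Longrightarrow> idx q = idx q' \<longleftrightarrow> q = q'"
  using inj by (auto simp: inj_on_def)

lemma J_bas_mem: "q \<in> P \<Longrightarrow> idx q \<in> bas J z \<longleftrightarrow> ps q = z"
  using idx_eq by (auto simp: J_bas)

lemma J_act:
  fixes v :: "nat \<Rightarrow> 'k::field"
  assumes q': "q' \<in> P"
  shows "act Q J a v (idx q') = (if ps q' = tgt Q a \<and> a # q' \<in> P then v (idx (a # q')) else 0)"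
proof -
  let ?S = "{q\<in>P. ps q = src Q a}"
  have "(\<Sum>i\<in>bas (J::('q,'a,'k) rep) (src Q a). mat (J::('q,'a,'k) rep) a (idx q') i * v i)
      = (\<Sum>q\<in>?S. mat (J::('q,'a,'k) rep) a (idx q') (idx q) * v (idx q))"
    unfolding J_bas by (rule sum.reindex_cong[where l=idx]) (use inj in \<open>auto simp: inj_on_def\<close>)
  also have "\<dots> = (\<Sum>q\<in>?S. if q = a # q' then v (idx (a # q')) else 0)"
  proof (rule sum.cong)
    fix q assume q: "q \<in> ?S"
    have "mat (J::('q,'a,'k) rep) a (idx q') (idx q) = (if q = a # q' then 1 else 0)"
      using q q' idx_eq by (auto simp: J_def)
    then show "mat (J::('q,'a,'k) rep) a (idx q') (idx q) * v (idx q) = (if q = a # q' then v (idx (a # q')) else 0)"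
      by simp
  qed simp
  also have "\<dots> = (if a # q' \<in> ?S then v (idx (a # q')) else 0)"
    using P_fin by (simp add: sum.delta')
  finally show ?thesis
    using q' by (auto simp: act_def J_bas_mem)
qed

lemma J_act_out: "j \<notin> idx ` P \<Longrightarrow> act Q J a v j = 0"
  by (auto simp: act_def J_bas)

lemma J_act_path:
  fixes v :: "nat \<Rightarrow> 'k::field"
  assumes q': "q' \<in> P"
  shows "act_path Q J r v (idx q') = (if r @ q' \<in> P then v (idx (r @ q')) else 0)"
  using q'
proof (induction r arbitrary: q' rule: rev_induct)
  case Nil then show ?case by simp
next
  case (snoc a r)
  have "act_path Q J (r @ [a]) v (idx q') = act Q J a (act_path Q J r v) (idx q')"
    by (simp add: act_path_snoc)
  also have "\<dots> = (if ps q' = tgt Q a \<and> a # q' \<in> P then act_path Q J r v (idx (a # q')) else 0)"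
    using J_act[OF snoc.prems] .
  also have "\<dots> = (if (r @ [a]) @ q' \<in> P then v (idx ((r @ [a]) @ q')) else 0)"
  proof -
    have "(r @ [a]) @ q' \<in> P \<Longrightarrow> ps q' = tgt Q a \<and> a # q' \<in> P"
      using P_app[of r "a # q'" y] P_Cons[of a q' y] by auto
    then show ?thesis using snoc.IH[of "a # q'"] by auto
  qed
  finally show ?case .
qed

lemma J_act_path_out: "r \<noteq> [] \<Longrightarrow> j \<notin> idx ` P \<Longrightarrow> act_path Q J r v j = 0"
  by (induction r rule: rev_induct) (auto simp: act_path_snoc J_act_out)

lemma J_coord: "q \<in> P \<Longrightarrow> v (idx q) = act_path Q J q v (idx [])"
  using J_act_path[of "[]" q v] by simp

lemma J_rel:
  fixes v :: "nat \<Rightarrow> 'k::field"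
  assumes p: "p \<in> R"
  shows "act_path Q J p v j = 0"
proof (cases "j \<in> idx ` P")
  case True
  then obtain q where q: "q \<in> P" "j = idx q" by auto
  have "p @ q \<notin> P"
  proof
    assume "p @ q \<in> P"
    moreover have "p @ q \<noteq> []" using R_nonempty[OF p] by simp
    ultimately have "is_npath Q (p @ q)" "p @ q \<notin> R" by (auto simp: Pset_def)
    then show False using R_close[OF p, of "[]" q] by simp
  qed
  then show ?thesis using J_act_path[OF q(1), of p v] q by simp
next
  case False then show ?thesis using J_act_path_out R_nonempty[OF p] by simp
qed

lemma J_is_rep: "is_rep Q R (J :: ('q,'a,'k::field) rep)"
proof -
  have "\<forall>z. z \<notin> verts Q \<longrightarrow> bas (J :: ('q,'a,'k::field) rep) z = {}"
    using P_path[OF yv] is_path_v by (force simp: J_bas)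
  then show ?thesis by (auto simp: is_rep_def J_fin J_rel fun_eq_iff)
qed

end


locale env2 = env Q R y idx kk for Q :: "('q,'a) quiver" and R y idx and kk :: "'k::field" +
  fixes x0 :: 'q and pth :: "'a list"
  assumes path: "is_path Q x0 pth" and nR: "pth \<notin> R" and yeq: "y = pend Q x0 pth"
begin

definition Sset where "Sset = {drop k pth | k. k \<le> length pth}"

lemma S_in_P: "k \<le> length pth \<Longrightarrow> drop k pth \<in> P"
proof (cases "k = length pth")
  case False
  assume k: "k \<le> length pth"
  then have k': "k < length pth" using False by simp
  have ne: "drop k pth \<noteq> []" using k' by simp
  have "is_path Q (pend Q x0 (take k pth)) (drop k pth)" using path_drop[OF path] .
  then have np: "is_npath Q (drop k pth)" using path_npath ne by blast
  have "pth \<noteq> []" using k' by auto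
  then have npp: "is_npath Q pth" using path_npath[OF path] by simp
  have "drop k pth \<notin> R" using notR_sub[of "take k pth" "drop k pth" "[]"] nR npp by simp
  moreover have "tgt Q (last (drop k pth)) = y" using k' yeq \<open>pth \<noteq> []\<close> by (simp add: pend_def)
  ultimately show ?thesis using np by (simp add: Pset_def)
qed simp

lemma S_sub: "Sset \<subseteq> P" using S_in_P by (auto simp: Sset_def)

lemma ps_drop: "k \<le> length pth \<Longrightarrow> ps (drop k pth) = path_vertex Q x0 pth k"
proof (cases "k = length pth")
  case True then show ?thesis by (simp add: yeq path_vertex_pend)
next
  case False
  assume "k \<le> length pth"
  then have k: "k < length pth" using False by simp
  then have "drop k pth = pth ! k # drop (Suc k) pth" by (simp add: Cons_nth_drop_Suc)
  then show ?thesis using path_src_nth[OF path k] by simp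
qed

lemma drop_inj: "k \<le> length pth \<Longrightarrow> k' \<le> length pth \<Longrightarrow> drop k pth = drop k' pth \<Longrightarrow> k = k'"
  by (metis diff_diff_cancel length_drop)

abbreviation SR :: "('q,'a,'k) rep" where "SR \<equiv> string_rep Q x0 pth"

definition j0m :: "'q \<Rightarrow> nat \<Rightarrow> nat \<Rightarrow> 'k" where
  "j0m z t k = (if t = idx (drop k pth) then 1 else 0)"

lemma JO1:
  fixes u :: "nat \<Rightarrow> 'k"
  assumes k: "k \<le> length pth" "path_vertex Q x0 pth k = z"
  shows "app SR J j0m z u (idx (drop k pth)) = u k"
proof -
  have inb: "idx (drop k pth) \<in> bas J z" using J_bas_mem S_in_P[OF k(1)] ps_drop[OF k(1)] k(2) by simp
  have "(\<Sum>k'\<in>bas SR z. j0m z (idx (drop k pth)) k' * u k') = (\<Sum>k'\<in>bas SR z. if k' = k then u k else 0)"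
  proof (rule sum.cong)
    fix k' assume "k' \<in> bas SR z"
    then have k'l: "k' \<le> length pth" by (simp add: sr_bas)
    have "idx (drop k pth) = idx (drop k' pth) \<longleftrightarrow> k' = k"
      using idx_eq[OF S_in_P[OF k(1)] S_in_P[OF k'l]] drop_inj[OF k(1) k'l] by auto
    then show "j0m z (idx (drop k pth)) k' * u k' = (if k' = k then u k else 0)"
      by (auto simp: j0m_def)
  qed simp
  also have "\<dots> = u k" using k by (simp add: sum.delta sr_fin sr_bas)
  finally show ?thesis using inb by (simp add: app_def)
qed

lemma JO2:
  fixes u :: "nat \<Rightarrow> 'k"
  assumes t: "t \<notin> idx ` Sset"
  shows "app SR J j0m z u t = 0"
proof -
  have "\<And>k'. k' \<in> bas SR z \<Longrightarrow> t \<noteq> idx (drop k' pth)" using t by (auto simp: Sset_def sr_bas)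
  then show ?thesis by (simp add: app_def j0m_def)
qed

lemma j0_hom: "is_hom Q SR (J :: ('q,'a,'k) rep) j0m"
  unfolding is_hom_def
proof (intro ballI ext)
  fix a and u :: "nat \<Rightarrow> 'k" and t
  assume a: "a \<in> arrs Q" and u: "u \<in> space SR (src Q a)"
  show "app SR J j0m (tgt Q a) (act Q SR a u) t = act Q J a (app SR J j0m (src Q a) u) t"
  proof (cases "t \<in> idx ` P")
    case False
    then have "t \<notin> bas (J :: ('q,'a,'k) rep) (tgt Q a)" by (auto simp: J_bas)
    then show ?thesis using False by (simp add: app_out J_act_out)
  next
    case True
    then obtain q' where q': "q' \<in> P" "t = idx q'" by auto
    have R: "act Q J a (app SR J j0m (src Q a) u) t =
       (if ps q' = tgt Q a \<and> a # q' \<in> P then app SR J j0m (src Q a) u (idx (a # q')) else 0)"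
      using J_act[OF q'(1), of a "app SR J j0m (src Q a) u"] q'(2) by simp
    show ?thesis
    proof (cases "q' \<in> Sset")
      case True
      then obtain k where k: "k \<le> length pth" "q' = drop k pth" by (auto simp: Sset_def)
      show ?thesis
      proof (cases "path_vertex Q x0 pth k = tgt Q a")
        case False
        then have "t \<notin> bas (J :: ('q,'a,'k) rep) (tgt Q a)" using J_bas_mem[OF q'(1)] q' k ps_drop by simp
        then show ?thesis using R q' k ps_drop False by (simp add: app_out)
      next
        case pv: True
        have L: "app SR J j0m (tgt Q a) (act Q SR a u) t = (if 0 < k \<and> k \<le> length pth \<and> pth!(k-1) = a then u (k-1) else 0)"
          using JO1[OF k(1) pv, of "act Q SR a u"] q' k sr_act[OF path, of a u k] by simp
        show ?thesis
        proof (cases "0 < k \<and> pth!(k-1) = a")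
          case True
          have kl: "k - 1 < length pth" using True k(1) by linarith
          have dk: "drop (k-1) pth = a # q'"
            using Cons_nth_drop_Suc[OF kl] True k by simp
          have k1: "k - 1 \<le> length pth" using k by simp
          have "ps (a # q') = path_vertex Q x0 pth (k-1)" using ps_drop[OF k1] dk by simp
          then have "app SR J j0m (src Q a) u (idx (a # q')) = u (k-1)"
            using JO1[OF k1, of "src Q a" u] dk by simp
          moreover have "a # q' \<in> P" using dk S_in_P[OF k1] by simp
          moreover have "ps q' = tgt Q a" using ps_drop[OF k(1)] k pv by simp
          ultimately show ?thesis using L R True k(1) by simp
        next
          case False
          have "app SR J j0m (src Q a) u (idx (a # q')) = 0" if aq: "a # q' \<in> P"
          proof (rule JO2, rule notI)
            assume "idx (a # q') \<in> idx ` Sset"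
            then obtain k' where k': "k' \<le> length pth" "idx (a # q') = idx (drop k' pth)" by (auto simp: Sset_def)
            then have e: "a # q' = drop k' pth" using idx_eq[OF aq S_in_P[OF k'(1)]] by simp
            then have k'l: "k' < length pth" by (metis drop_all list.distinct(1) not_le)
            then have "drop k' pth = pth ! k' # drop (Suc k') pth" by (simp add: Cons_nth_drop_Suc)
            with e have "a = pth ! k'" "q' = drop (Suc k') pth" by auto
            moreover then have "k = Suc k'" using drop_inj[of k "Suc k'"] k k'l by simp
            ultimately show False using False by simp
          qed
          then show ?thesis using L R False by auto
        qed
      qed
    next
      case False
      have "t \<notin> idx ` Sset"
      proof
        assume "t \<in> idx ` Sset"
        then obtain q2 where q2: "q2 \<in> Sset" "t = idx q2" by auto
        then have "q2 = q'" using idx_eq[OF q'(1), of q2] S_sub q'(2) by auto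
        then show False using False q2 by simp
      qed
      then have L: "app SR J j0m (tgt Q a) (act Q SR a u) t = 0" by (rule JO2)
      have "app SR J j0m (src Q a) u (idx (a # q')) = 0" if aq: "a # q' \<in> P"
      proof (rule JO2, rule notI)
        assume "idx (a # q') \<in> idx ` Sset"
        then obtain k' where k': "k' \<le> length pth" "idx (a # q') = idx (drop k' pth)" by (auto simp: Sset_def)
        then have e: "a # q' = drop k' pth" using idx_eq[OF aq S_in_P[OF k'(1)]] by simp
        then have k'l: "k' < length pth" by (metis drop_all list.distinct(1) not_le)
        then have "drop k' pth = pth ! k' # drop (Suc k') pth" by (simp add: Cons_nth_drop_Suc)
        with e have "q' = drop (Suc k') pth" by auto
        then have "q' \<in> Sset" using k'l by (auto simp: Sset_def)
        then show False using False by simp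
      qed
      then show ?thesis using L R by auto
    qed
  qed
qed

lemma j0_mono: "hom_mono Q SR (J :: ('q,'a,'k) rep) j0m"
  unfolding hom_mono_def inj_on_def
proof (intro ballI impI ext)
  fix z and u1 u2 :: "nat \<Rightarrow> 'k" and k
  assume u: "u1 \<in> space SR z" "u2 \<in> space SR z" and e: "app SR J j0m z u1 = app SR J j0m z u2"
  show "u1 k = u2 k"
  proof (cases "k \<in> bas SR z")
    case True
    then have k: "k \<le> length pth" "path_vertex Q x0 pth k = z" by (auto simp: sr_bas)
    show ?thesis using JO1[OF k, of u1] JO1[OF k, of u2] e by simp
  next
    case False then show ?thesis using u by (simp add: space_def)
  qed
qed

lemma j0_img:
  fixes v :: "nat \<Rightarrow> 'k"
  assumes v: "v \<in> space J z" and vs: "\<forall>q\<in>P. q \<notin> Sset \<longrightarrow> v (idx q) = 0"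
  shows "\<exists>u\<in>space SR z. app SR J j0m z u = v"
proof -
  define u where "u = (\<lambda>k. if k \<in> bas SR z then v (idx (drop k pth)) else 0)"
  have "app SR J j0m z u = v"
  proof
    fix t show "app SR J j0m z u t = v t"
    proof (cases "t \<in> bas (J :: ('q,'a,'k) rep) z")
      case False then show ?thesis using v by (simp add: app_out space_def)
    next
      case True
      then obtain q where q: "q \<in> P" "ps q = z" "t = idx q" by (auto simp: J_bas)
      show ?thesis
      proof (cases "q \<in> Sset")
        case True
        then obtain k where k: "k \<le> length pth" "q = drop k pth" by (auto simp: Sset_def)
        have pv: "path_vertex Q x0 pth k = z" using ps_drop[OF k(1)] k q by simp
        show ?thesis using JO1[OF k(1) pv, of u] q k pv by (simp add: u_def sr_bas)
      next
        case False
        have "t \<notin> idx ` Sset" using False q idx_eq S_sub by auto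
        then show ?thesis using JO2 vs q False by simp
      qed
    qed
  qed
  moreover have "u \<in> space SR z" by (simp add: u_def space_def)
  ultimately show ?thesis by blast
qed

end


definition sc :: "'k::field \<Rightarrow> (nat \<Rightarrow> 'k) \<Rightarrow> (nat \<Rightarrow> 'k)" where
  "sc c v = (\<lambda>i. c * v i)"

lemma vs_sc: "vector_space (sc :: 'k::field \<Rightarrow> _)"
  by unfold_locales (auto simp: sc_def fun_eq_iff algebra_simps)

lemma vsp_sc: "vector_space_pair (sc :: 'k::field \<Rightarrow> _) (sc :: 'k::field \<Rightarrow> _)"
  unfolding vector_space_pair_def using vs_sc by auto

lemma left_inv_exists:
  fixes L :: "(nat \<Rightarrow> 'k::field) \<Rightarrow> (nat \<Rightarrow> 'k)" and V :: "(nat \<Rightarrow> 'k) set"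
  assumes add: "\<And>u w. L (\<lambda>i. u i + w i) = (\<lambda>i. L u i + L w i)"
    and hom: "\<And>c u. L (\<lambda>i. c * u i) = (\<lambda>i. c * L u i)"
    and V0: "(\<lambda>_. 0) \<in> V" and Vadd: "\<And>u w. u \<in> V \<Longrightarrow> w \<in> V \<Longrightarrow> (\<lambda>i. u i + w i) \<in> V"
    and Vsm: "\<And>c u. u \<in> V \<Longrightarrow> (\<lambda>i. c * u i) \<in> V"
    and inj: "inj_on L V"
  shows "\<exists>G. (\<forall>u w. G (\<lambda>i. u i + w i) = (\<lambda>i. G u i + G w i))
           \<and> (\<forall>c u. G (\<lambda>i. c * u i) = (\<lambda>i. c * G u i)) \<and> (\<forall>v\<in>V. G (L v) = v)"
proof -
  interpret vector_space_pair "sc :: 'k \<Rightarrow> _" "sc :: 'k \<Rightarrow> _" by (rule vsp_sc)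
  have lin: "Vector_Spaces.linear sc sc L"
    unfolding Vector_Spaces.linear_def module_hom_def module_hom_axioms_def
    using vs_sc add hom module_iff_vector_space[of "sc::'k\<Rightarrow>_"]
    by (auto simp: sc_def plus_fun_def vector_space_def fun_eq_iff algebra_simps)
  have "vs1.subspace V"
    unfolding vs1.subspace_def using V0 Vadd Vsm
    by (auto simp: sc_def plus_fun_def zero_fun_def)
  from linear_exists_left_inverse_on[OF lin this inj] obtain G where
    G: "Vector_Spaces.linear sc sc G" "\<forall>v\<in>V. G (L v) = v" by blast
  interpret G: Vector_Spaces.linear sc sc G by (rule G(1))
  show ?thesis
    apply (rule exI[of _ G])
    using G.add[unfolded plus_fun_def] G.scale[unfolded sc_def] G(2) by auto
qed

lemma G_sum:
  fixes G :: "(nat \<Rightarrow> 'k::field) \<Rightarrow> (nat \<Rightarrow> 'k)"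
  assumes add: "\<And>u w. G (\<lambda>i. u i + w i) = (\<lambda>i. G u i + G w i)"
    and hom: "\<And>c u. G (\<lambda>i. c * u i) = (\<lambda>i. c * G u i)"
    and fin: "finite L"
  shows "G (\<lambda>i. \<Sum>l\<in>L. f l i) = (\<lambda>j. \<Sum>l\<in>L. G (f l) j)"
  using fin
proof (induction L rule: finite_induct)
  case empty
  have "G (\<lambda>i. 0 * (\<lambda>_. 0::'k) i) = (\<lambda>i. 0 * G (\<lambda>_. 0) i)" by (rule hom)
  then show ?case by simp
next
  case (insert x F)
  have "G (\<lambda>i. \<Sum>l\<in>insert x F. f l i) = G (\<lambda>i. f x i + (\<Sum>l\<in>F. f l i))" using insert by simp
  also have "\<dots> = (\<lambda>j. G (f x) j + G (\<lambda>i. \<Sum>l\<in>F. f l i) j)" by (rule add)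
  finally show ?case using insert by simp
qed

context sa begin

lemma hom_path:
  assumes H: "is_hom Q V W F" and p: "is_path Q z p" and v: "v \<in> space V z"
  shows "app V W F (pend Q z p) (act_path Q V p v) = act_path Q W p (app V W F z v)"
  using p v
proof (induction p arbitrary: z v)
  case Nil then show ?case by simp
next
  case (Cons a p)
  have a: "a \<in> arrs Q" "src Q a = z" "is_path Q (tgt Q a) p"
    using Cons.prems(1) unfolding is_path_Cons by auto
  have "app V W F (pend Q z (a # p)) (act_path Q V (a # p) v)
      = act_path Q W p (app V W F (tgt Q a) (act Q V a v))"
    using Cons.IH[OF a(3) act_in_space] by simp
  also have "app V W F (tgt Q a) (act Q V a v) = act Q W a (app V W F z v)"
    using H a Cons.prems(2) unfolding is_hom_def by auto
  finally show ?case by simp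
qed

lemma act_path_space: "is_path Q z p \<Longrightarrow> v \<in> space V z \<Longrightarrow> act_path Q V p v \<in> space V (pend Q z p)"
proof (induction p arbitrary: z v)
  case Nil then show ?case by simp
next
  case (Cons a p)
  then show ?case using act_in_space[of Q V a v] by (auto simp: is_path_Cons)
qed

end


locale main = env2 Q R y idx kk x0 pth for Q :: "('q,'a) quiver" and R y idx and kk :: "'k::field" and x0 pth +
  fixes M E :: "('q,'a,'k) rep" and i T :: "'q \<Rightarrow> nat \<Rightarrow> nat \<Rightarrow> 'k"
  assumes repM: "is_rep Q R M" and envE: "injective_envelope Q R M E i"
    and Thom: "is_hom Q M SR T" and Tmono: "hom_mono Q M SR T" and Tepi: "hom_epi Q M SR T"
begin

lemma repE: "is_rep Q R E" using envE by (simp add: injective_envelope_def injective_rep_def)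
lemma injE: "injective_rep Q R E" using envE by (simp add: injective_envelope_def)
lemma ihom: "is_hom Q M E i" using envE by (simp add: injective_envelope_def essential_mono_def)
lemma imono: "hom_mono Q M E i" using envE by (simp add: injective_envelope_def essential_mono_def)
lemma iess: "essential_mono Q M E i" using envE by (simp add: injective_envelope_def)
lemma finE: "finite (bas E z)" using repE by (simp add: is_rep_def)
lemma finM: "finite (bas M z)" using repM by (simp add: is_rep_def)

definition jm :: "'q \<Rightarrow> nat \<Rightarrow> nat \<Rightarrow> 'k" where
  "jm z t l = (\<Sum>k\<in>bas SR z. j0m z t k * T z k l)"

lemma jm_app: "app M J jm z m = app SR J j0m z (app M SR T z m)"
proof -
  have "jm = (\<lambda>x k i. \<Sum>j\<in>bas SR x. j0m x k j * T x j i)" by (simp add: fun_eq_iff jm_def)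
  then show ?thesis by (simp add: app_comp)
qed

lemma j_hom: "is_hom Q M J jm"
  unfolding is_hom_def
proof (intro ballI)
  fix a m assume a: "a \<in> arrs Q" and m: "m \<in> space M (src Q a)"
  have "app M J jm (tgt Q a) (act Q M a m) = app SR J j0m (tgt Q a) (act Q SR a (app M SR T (src Q a) m))"
    using Thom a m by (simp add: jm_app is_hom_def)
  also have "\<dots> = act Q J a (app SR J j0m (src Q a) (app M SR T (src Q a) m))"
    using j0_hom a app_in_space[of M SR T "src Q a" m] unfolding is_hom_def by blast
  finally show "app M J jm (tgt Q a) (act Q M a m) = act Q J a (app M J jm (src Q a) m)"
    by (simp add: jm_app)
qed

lemma j_mono: "hom_mono Q M J jm"
  unfolding hom_mono_def
proof (intro ballI)
  fix z assume z: "z \<in> verts Q"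
  have "inj_on (app M SR T z) (space M z)" using Tmono z by (simp add: hom_mono_def)
  moreover have "inj_on (app SR J j0m z) (space SR z)" using j0_mono z by (simp add: hom_mono_def)
  ultimately show "inj_on (app M J jm z) (space M z)"
    unfolding jm_app inj_on_def using app_in_space[of M SR T z] by blast
qed

lemma j_img:
  assumes z: "z \<in> verts Q" and v: "v \<in> space J z" and vs: "\<forall>q\<in>P. q \<notin> Sset \<longrightarrow> v (idx q) = 0"
  shows "\<exists>m\<in>space M z. app M J jm z m = v"
proof -
  obtain u where u: "u \<in> space SR z" "app SR J j0m z u = v" using j0_img[OF v vs] by blast
  have "u \<in> app M SR T z ` space M z" using Tepi z u(1) unfolding hom_epi_def by blast
  then obtain m where "m \<in> space M z" "app M SR T z m = u" by blast
  then show ?thesis using u by (auto simp: jm_app)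
qed

lemma j_supp: "q \<in> P \<Longrightarrow> q \<notin> Sset \<Longrightarrow> app M J jm z m (idx q) = 0"
proof -
  assume q: "q \<in> P" "q \<notin> Sset"
  have "idx q \<notin> idx ` Sset" using q idx_eq S_sub by auto
  then show ?thesis by (simp add: jm_app JO2)
qed

lemma Gex: "\<exists>G. (\<forall>u w. G (\<lambda>i. u i + w i) = (\<lambda>i. G u i + G w i))
           \<and> (\<forall>c u. G (\<lambda>i. c * u i) = (\<lambda>i. c * G u i)) \<and> (\<forall>v\<in>space M y. G (app M E i y v) = v)"
  by (rule left_inv_exists) (use imono yv in \<open>auto simp: app_add app_scale space_def hom_mono_def\<close>)

definition Gi where "Gi = (SOME G. (\<forall>u w. G (\<lambda>i. u i + w i) = (\<lambda>i. G u i + G w i))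
           \<and> (\<forall>c u. G (\<lambda>i. c * u i) = (\<lambda>i. c * G u i)) \<and> (\<forall>v\<in>space M y. G (app M E i y v) = v))"

lemma Gi: "\<And>u w. Gi (\<lambda>i. u i + w i) = (\<lambda>i. Gi u i + Gi w i)"
  "\<And>c u. Gi (\<lambda>i. c * u i) = (\<lambda>i. c * Gi u i)" "\<And>v. v\<in>space M y \<Longrightarrow> Gi (app M E i y v) = v"
  using someI_ex[OF Gex] unfolding Gi_def[symmetric] by auto

definition psi where "psi w = app M J jm y (Gi w) (idx [])"

lemma psi_sum: "finite L \<Longrightarrow> psi (\<lambda>i. \<Sum>l\<in>L. c l * f l i) = (\<Sum>l\<in>L. c l * psi (f l))"
proof -
  assume L: "finite L"
  have "Gi (\<lambda>i. \<Sum>l\<in>L. c l * f l i) = (\<lambda>j. \<Sum>l\<in>L. Gi (\<lambda>i. c l * f l i) j)"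
    by (rule G_sum[OF Gi(1) Gi(2) L])
  also have "\<dots> = (\<lambda>j. \<Sum>l\<in>L. c l * Gi (f l) j)" by (simp add: Gi(2))
  finally show ?thesis by (simp add: psi_def app_sum_scale)
qed

lemma psi_zero: "psi (\<lambda>_. 0) = 0"
  using psi_sum[of "{}"] by simp

lemma psi_i: "m \<in> space M y \<Longrightarrow> psi (app M E i y m) = app M J jm y m (idx [])"
  by (simp add: psi_def Gi(3))

definition invP where "invP t = the_inv_into P idx t"

lemma invP: "q \<in> P \<Longrightarrow> invP (idx q) = q"
  using inj by (simp add: invP_def the_inv_into_f_f)

definition H :: "'q \<Rightarrow> nat \<Rightarrow> nat \<Rightarrow> 'k" where
  "H z t l = (if t \<in> bas J z then psi (act_path Q E (invP t) (ev l)) else 0)"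

lemma H1:
  assumes v: "v \<in> space E z" and q: "q \<in> P" "ps q = z"
  shows "app E J H z v (idx q) = psi (act_path Q E q v)"
proof -
  have t: "idx q \<in> bas J z" using J_bas_mem q by simp
  have "app E J H z v (idx q) = (\<Sum>l\<in>bas E z. psi (act_path Q E q (ev l)) * v l)"
    using t by (simp add: app_def H_def invP[OF q(1)])
  also have "\<dots> = psi (\<lambda>j. \<Sum>l\<in>bas E z. v l * act_path Q E q (ev l) j)"
    by (simp add: psi_sum finE mult.commute)
  also have "(\<lambda>j. \<Sum>l\<in>bas E z. v l * act_path Q E q (ev l) j) = act_path Q E q (\<lambda>i. \<Sum>l\<in>bas E z. v l * ev l i)"
    by (simp add: act_path_sum act_path_scale)
  also have "(\<lambda>i. \<Sum>l\<in>bas E z. v l * ev l i) = v" using expand[OF finE v] by simp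
  finally show ?thesis .
qed

lemma h_hom: "is_hom Q E J H"
  unfolding is_hom_def
proof (intro ballI ext)
  fix a v t assume a: "a \<in> arrs Q" and v: "v \<in> space E (src Q a)"
  show "app E J H (tgt Q a) (act Q E a v) t = act Q J a (app E J H (src Q a) v) t"
  proof (cases "t \<in> bas J (tgt Q a)")
    case False
    then have "t \<notin> idx ` P \<or> (\<exists>q\<in>P. t = idx q \<and> ps q \<noteq> tgt Q a)" using J_bas_mem by auto
    then show ?thesis
    proof
      assume "t \<notin> idx ` P" then show ?thesis using False by (simp add: app_out J_act_out)
    next
      assume "\<exists>q\<in>P. t = idx q \<and> ps q \<noteq> tgt Q a"
      then obtain q where "q \<in> P" "t = idx q" "ps q \<noteq> tgt Q a" by auto
      then show ?thesis using False J_act[of q a "app E J H (src Q a) v"] by (simp add: app_out)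
    qed
  next
    case True
    then obtain q where q: "q \<in> P" "ps q = tgt Q a" "t = idx q" by (auto simp: J_bas J_bas_mem)
    have L: "app E J H (tgt Q a) (act Q E a v) t = psi (act_path Q E (a # q) v)"
      using H1[OF act_in_space q(1,2)] q(3) by simp
    have Rr: "act Q J a (app E J H (src Q a) v) t = (if a # q \<in> P then psi (act_path Q E (a # q) v) else 0)"
      using J_act[OF q(1), of a "app E J H (src Q a) v"] q H1[OF v, of "a # q"] by auto
    show ?thesis
    proof (cases "a # q \<in> P")
      case True then show ?thesis using L Rr by simp
    next
      case False
      have "a # q \<in> R" using P_mk[OF a q(1) q(2) False] .
      then have "act_path Q E (a # q) v = (\<lambda>_. 0)" using repE v by (auto simp: is_rep_def)
      then show ?thesis using L Rr False psi_zero by simp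
    qed
  qed
qed

lemma h_i:
  assumes m: "m \<in> space M z"
  shows "app E J H z (app M E i z m) = app M J jm z m"
proof
  fix t show "app E J H z (app M E i z m) t = app M J jm z m t"
  proof (cases "t \<in> bas J z")
    case False then show ?thesis by (simp add: app_out)
  next
    case True
    then obtain q where q: "q \<in> P" "ps q = z" "t = idx q" by (auto simp: J_bas J_bas_mem)
    have pq: "is_path Q z q" "pend Q z q = y" using P_path[OF yv q(1)] q(2) by auto
    have "app E J H z (app M E i z m) t = psi (act_path Q E q (app M E i z m))"
      using H1[OF app_in_space q(1,2)] q(3) by simp
    also have "act_path Q E q (app M E i z m) = app M E i y (act_path Q M q m)"
      using hom_path[OF ihom pq(1) m] pq(2) by simp
    also have "psi (app M E i y (act_path Q M q m)) = app M J jm y (act_path Q M q m) (idx [])"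
      using psi_i act_path_space[OF pq(1) m] pq(2) by simp
    also have "app M J jm y (act_path Q M q m) = act_path Q J q (app M J jm z m)"
      using hom_path[OF j_hom pq(1) m] pq(2) by simp
    also have "act_path Q J q (app M J jm z m) (idx []) = app M J jm z m t"
      using J_coord[OF q(1)] q(3) by simp
    finally show ?thesis .
  qed
qed

lemma h_mono: "hom_mono Q E J H"
proof -
  define U where "U z = {v \<in> space E z. app E J H z v = (\<lambda>_. 0)}" for z
  have sub: "subrep Q E U"
    unfolding subrep_def U_def
  proof (intro conjI ballI allI)
    fix a u assume a: "a \<in> arrs Q" and u: "u \<in> {v \<in> space E (src Q a). app E J H (src Q a) v = (\<lambda>_. 0)}"
    have "app E J H (tgt Q a) (act Q E a u) = act Q J a (app E J H (src Q a) u)"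
      using h_hom a u by (auto simp: is_hom_def)
    then show "act Q E a u \<in> {v \<in> space E (tgt Q a). app E J H (tgt Q a) v = (\<lambda>_. 0)}"
      using u act_in_space by (simp add: act_zero)
  qed (auto simp: space_zero space_add space_scale app_zero app_add app_scale)
  have zero: "\<forall>z\<in>verts Q. \<forall>u\<in>U z. u = (\<lambda>_. 0)"
  proof (rule ccontr)
    assume "\<not> ?thesis"
    then have "\<exists>x\<in>verts Q. \<exists>u\<in>U x. u \<noteq> (\<lambda>_. 0)" by blast
    moreover have "\<forall>U. subrep Q E U \<and> (\<exists>x\<in>verts Q. \<exists>u\<in>U x. u \<noteq> (\<lambda>_. 0)) \<longrightarrow>
        (\<exists>x\<in>verts Q. \<exists>u\<in>U x. u \<noteq> (\<lambda>_. 0) \<and> u \<in> app M E i x ` space M x)"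
      using iess unfolding essential_mono_def by simp
    ultimately have "\<exists>x\<in>verts Q. \<exists>u\<in>U x. u \<noteq> (\<lambda>_. 0) \<and> u \<in> app M E i x ` space M x"
      using sub by simp
    then obtain z u where z: "z \<in> verts Q" and u: "u \<in> U z" "u \<noteq> (\<lambda>_. 0)"
      and um: "u \<in> app M E i z ` space M z" by blast
    then obtain m where m: "m \<in> space M z" "u = app M E i z m" by auto
    have "app M J jm z m = (\<lambda>_. 0)" using h_i[OF m(1)] m(2) u(1) by (simp add: U_def)
    then have "app M J jm z m = app M J jm z (\<lambda>_. 0)" by (simp add: app_zero)
    moreover have "inj_on (app M J jm z) (space M z)" using j_mono z by (simp add: hom_mono_def)
    ultimately have "m = (\<lambda>_. 0)" using m(1) space_zero[of M z] by (simp add: inj_on_def)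
    then show False using u m by (simp add: app_zero)
  qed
  show ?thesis
    unfolding hom_mono_def inj_on_def
  proof (intro ballI impI)
    fix z v w assume z: "z \<in> verts Q" and v: "v \<in> space E z" and w: "w \<in> space E z"
      and e: "app E J H z v = app E J H z w"
    have "(\<lambda>i. v i - w i) \<in> U z" using v w e by (simp add: U_def space_diff app_diff)
    then have "(\<lambda>i. v i - w i) = (\<lambda>_. 0)" using zero z by blast
    then show "v = w" by (simp add: fun_eq_iff)
  qed
qed

end


context main begin

lemma gex: "\<exists>g. is_hom Q J E g \<and> (\<forall>x\<in>verts Q. \<forall>v\<in>space M x. app J E g x (app M J jm x v) = app M E i x v)"
proof -
  have A: "\<forall>X Y f g. is_rep Q R X \<and> is_rep Q R Y \<and> is_hom Q X Y f \<and> hom_mono Q X Y f \<and> is_hom Q X E g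
        \<longrightarrow> (\<exists>h. is_hom Q Y E h \<and>
               (\<forall>x\<in>verts Q. \<forall>v\<in>space X x. app Y E h x (app X Y f x v) = app X E g x v))"
    using injE unfolding injective_rep_def by (rule conjunct2)
  have B: "is_rep Q R M \<and> is_rep Q R J \<and> is_hom Q M J jm \<and> hom_mono Q M J jm \<and> is_hom Q M E i"
    using repM J_is_rep j_hom j_mono ihom by simp
  show ?thesis using A[THEN spec, THEN spec, THEN spec, THEN spec, of M J jm i] B by (rule mp)
qed

definition gm where "gm = (SOME g. is_hom Q J E g \<and> (\<forall>x\<in>verts Q. \<forall>v\<in>space M x. app J E g x (app M J jm x v) = app M E i x v))"

lemma gm: "is_hom Q J E gm" "\<And>x v. x \<in> verts Q \<Longrightarrow> v \<in> space M x \<Longrightarrow> app J E gm x (app M J jm x v) = app M E i x v"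
  using someI_ex[OF gex] unfolding gm_def[symmetric] by auto

definition Img where "Img z = app E J H z ` space E z"

lemma Img_sum:
  assumes L: "finite L" and f: "\<And>l. l \<in> L \<Longrightarrow> f l \<in> Img z"
  shows "(\<lambda>i. \<Sum>l\<in>L. c l * f l i) \<in> Img z"
proof -
  have "\<forall>l\<in>L. \<exists>e. e \<in> space E z \<and> app E J H z e = f l"
  proof
    fix l assume "l \<in> L"
    then have "f l \<in> app E J H z ` space E z" using f unfolding Img_def by simp
    then show "\<exists>e. e \<in> space E z \<and> app E J H z e = f l" by (auto simp: image_iff)
  qed
  then have "\<exists>pre. \<forall>l\<in>L. pre l \<in> space E z \<and> app E J H z (pre l) = f l" by (rule bchoice)
  then obtain pre where pre0: "\<forall>l\<in>L. pre l \<in> space E z \<and> app E J H z (pre l) = f l" ..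
  have "app E J H z (\<lambda>i. \<Sum>l\<in>L. c l * pre l i) = (\<lambda>j. \<Sum>l\<in>L. c l * app E J H z (pre l) j)"
    by (rule app_sum_scale)
  also have "\<dots> = (\<lambda>i. \<Sum>l\<in>L. c l * f l i)"
  proof
    fix j show "(\<Sum>l\<in>L. c l * app E J H z (pre l) j) = (\<Sum>l\<in>L. c l * f l j)"
      by (rule sum.cong) (use pre0 in auto)
  qed
  finally have e: "app E J H z (\<lambda>i. \<Sum>l\<in>L. c l * pre l i) = (\<lambda>i. \<Sum>l\<in>L. c l * f l i)" .
  have "(\<lambda>i. \<Sum>l\<in>L. c l * pre l i) \<in> space E z"
    by (rule space_sum) (use pre0 in \<open>auto intro: space_scale\<close>)
  then show ?thesis unfolding Img_def by (rule image_eqI[where f="app E J H z", OF e[symmetric]])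
qed

lemma Img_add: "u \<in> Img z \<Longrightarrow> w \<in> Img z \<Longrightarrow> (\<lambda>i. u i + w i) \<in> Img z"
proof -
  assume "u \<in> Img z" "w \<in> Img z"
  then obtain u' w' where u': "u' \<in> space E z" "u = app E J H z u'" and w': "w' \<in> space E z" "w = app E J H z w'"
    by (auto simp: Img_def)
  have e: "app E J H z (\<lambda>i. u' i + w' i) = (\<lambda>i. u i + w i)" using u' w' by (simp add: app_add)
  have "(\<lambda>i. u' i + w' i) \<in> space E z" by (rule space_add[OF u'(1) w'(1)])
  then show ?thesis unfolding Img_def by (rule image_eqI[where f="app E J H z", OF e[symmetric]])
qed

definition phi where "phi z w = app E J H z (app J E gm z w)"

lemma phi_Img: "phi z w \<in> Img z"
  unfolding phi_def Img_def by (rule imageI[OF app_in_space])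

lemma phi_path: "is_path Q z r \<Longrightarrow> w \<in> space J z \<Longrightarrow> act_path Q J r (phi z w) = phi (pend Q z r) (act_path Q J r w)"
  unfolding phi_def
  using hom_path[OF h_hom _ app_in_space] hom_path[OF gm(1)] by simp

lemma ev_nil: "phi y (ev (idx [])) = ev (idx [])"
proof -
  have sp: "ev (idx []) \<in> space J y" using J_bas_mem[of "[]" y] by (intro space_ev) simp
  have "\<forall>q\<in>P. q \<notin> Sset \<longrightarrow> ev (idx []) (idx q) = (0::'k)"
  proof (intro ballI impI)
    fix q assume q: "q \<in> P" "q \<notin> Sset"
    have "[] \<in> Sset" by (auto simp: Sset_def intro: exI[of _ "length pth"])
    then have "q \<noteq> []" using q by auto
    then show "ev (idx []) (idx q) = (0::'k)" using idx_eq[OF q(1) Nil_P] by (simp add: ev_def)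
  qed
  then obtain m where m: "m \<in> space M y" "app M J jm y m = ev (idx [])" using j_img[OF yv sp] by blast
  show ?thesis using gm(2)[OF yv m(1)] h_i[OF m(1)] m(2) by (simp add: phi_def)
qed

lemma act_path_ev:
  assumes q: "q \<in> P"
  shows "act_path Q J r (ev (idx q)) = (if \<exists>q''. q = r @ q'' then ev (idx (drop (length r) q)) else (\<lambda>_. 0))"
proof
  fix j show "act_path Q J r (ev (idx q)) j = (if \<exists>q''. q = r @ q'' then ev (idx (drop (length r) q)) else (\<lambda>_. 0)) j"
  proof (cases "j \<in> idx ` P")
    case True
    then obtain q'' where q'': "q'' \<in> P" "j = idx q''" by auto
    have L0: "act_path Q J r (ev (idx q)) (idx q'') = (if r @ q'' \<in> P then ev (idx q) (idx (r @ q'')) else 0)"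
      by (rule J_act_path[OF q''(1)])
    have L: "act_path Q J r (ev (idx q)) j = (if r @ q'' = q then 1 else 0)"
    proof (cases "r @ q'' \<in> P")
      case True
      then have "ev (idx q) (idx (r @ q'')) = (if r @ q'' = q then 1 else (0::'k))"
        using idx_eq[OF q True] by (auto simp: ev_def)
      then show ?thesis using L0 True q''(2) by simp
    next
      case False
      then have "r @ q'' \<noteq> q" using q by auto
      then show ?thesis using L0 False q''(2) by simp
    qed
    show ?thesis
    proof (cases "\<exists>q0. q = r @ q0")
      case True
      then obtain q0 where q0: "q = r @ q0" by auto
      have q0P: "q0 \<in> P" using P_app q q0 by simp
      show ?thesis using L q0 idx_eq[OF q0P q''(1)] q'' by (auto simp: ev_def)
    next
      case False then show ?thesis using L by auto
    qed
  next
    case False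
    have A: "act_path Q J r (ev (idx q)) j = 0"
    proof (cases "r = []")
      case True then show ?thesis using False q by (auto simp: ev_def)
    next
      case False then show ?thesis using J_act_path_out \<open>j \<notin> idx ` P\<close> by simp
    qed
    have "drop (length r) q \<in> P" using P_drop[OF q] .
    then show ?thesis using A False by (auto simp: ev_def)
  qed
qed

lemma ev_Img: "q \<in> P \<Longrightarrow> ev (idx q) \<in> Img (ps q)"
proof (induction "length q" arbitrary: q rule: less_induct)
  case less
  define z where "z = ps q"
  have q: "q \<in> P" by fact
  have eqsp: "ev (idx q) \<in> space J z" using J_bas_mem[OF q] z_def by (intro space_ev) simp
  define w' where "w' = phi z (ev (idx q))"
  have w'sp: "w' \<in> space J z" unfolding w'_def phi_def by (rule app_in_space)
  have coord: "w' (idx r) = (if \<exists>q''. q = r @ q'' then phi y (ev (idx (drop (length r) q))) (idx []) else 0)"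
    if r: "r \<in> P" "ps r = z" for r
  proof -
    have pr0: "is_path Q (ps r) r \<and> pend Q (ps r) r = y" by (rule P_path[OF yv r(1)])
    then have pr: "is_path Q z r" "pend Q z r = y" unfolding r(2) by simp_all
    have "w' (idx r) = act_path Q J r w' (idx [])" by (rule J_coord[OF r(1)])
    also have "\<dots> = phi y (act_path Q J r (ev (idx q))) (idx [])"
      unfolding w'_def using phi_path[OF pr(1) eqsp] pr(2) by simp
    also have "\<dots> = (if \<exists>q''. q = r @ q'' then phi y (ev (idx (drop (length r) q))) (idx []) else 0)"
    proof (cases "\<exists>q''. q = r @ q''")
      case True then show ?thesis using act_path_ev[OF q, of r] by simp
    next
      case False then show ?thesis using act_path_ev[OF q, of r] by (simp add: phi_def app_zero)
    qed
    finally show ?thesis .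
  qed
  define d where "d = (\<lambda>t. ev (idx q) t - w' t)"
  have dsp: "d \<in> space J z" unfolding d_def using eqsp w'sp by (rule space_diff)
  have dz: "d (idx r) = 0" if r: "r \<in> P" "ps r = z" "length q \<le> length r" for r
  proof (cases "r = q")
    case True
    have "w' (idx r) = 1" using coord[OF r(1,2)] True ev_nil by (simp add: ev_def)
    then show ?thesis using True by (simp add: d_def ev_def)
  next
    case False
    have "\<not> (\<exists>q''. q = r @ q'')" using False r(3) by auto
    then have "w' (idx r) = 0" using coord[OF r(1,2)] by simp
    moreover have "ev (idx q) (idx r) = (0::'k)" using False idx_eq[OF q r(1)] by (auto simp: ev_def)
    ultimately show ?thesis by (simp add: d_def)
  qed
  define Rs where "Rs = {r\<in>P. ps r = z \<and> length r < length q}"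
  have finRs: "finite Rs" using P_fin by (simp add: Rs_def)
  have "d = (\<lambda>j. \<Sum>t\<in>bas J z. d t * ev t j)" using expand[OF J_fin dsp] .
  also have "\<dots> = (\<lambda>j. \<Sum>r\<in>{r\<in>P. ps r = z}. d (idx r) * ev (idx r) j)"
    unfolding J_bas by (subst sum.reindex) (use inj in \<open>auto simp: inj_on_def\<close>)
  also have "\<dots> = (\<lambda>j. \<Sum>r\<in>Rs. d (idx r) * ev (idx r) j)"
  proof
    fix j show "(\<Sum>r\<in>{r\<in>P. ps r = z}. d (idx r) * ev (idx r) j) = (\<Sum>r\<in>Rs. d (idx r) * ev (idx r) j)"
    proof (rule sum.mono_neutral_right)
      show "finite {r\<in>P. ps r = z}" using P_fin by simp
      show "Rs \<subseteq> {r\<in>P. ps r = z}" by (auto simp: Rs_def)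
      show "\<forall>r\<in>{r\<in>P. ps r = z} - Rs. d (idx r) * ev (idx r) j = 0"
      proof
        fix r assume "r \<in> {r\<in>P. ps r = z} - Rs"
        then have "r \<in> P" "ps r = z" "length q \<le> length r" by (auto simp: Rs_def)
        then show "d (idx r) * ev (idx r) j = 0" using dz by simp
      qed
    qed
  qed
  finally have dR: "d = (\<lambda>j. \<Sum>r\<in>Rs. d (idx r) * ev (idx r) j)" .
  have "(\<lambda>j. \<Sum>r\<in>Rs. d (idx r) * ev (idx r) j) \<in> Img z"
  proof (rule Img_sum[OF finRs])
    fix r assume "r \<in> Rs"
    then have "length r < length q" "r \<in> P" "ps r = z" by (auto simp: Rs_def)
    then show "ev (idx r) \<in> Img z" using less.hyps[of r] by simp
  qed
  then have "d \<in> Img z" by (rule ssubst[OF dR])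
  moreover have "w' \<in> Img z" unfolding w'_def by (rule phi_Img)
  ultimately have "(\<lambda>i. w' i + d i) \<in> Img z" by (rule Img_add[rotated])
  moreover have "(\<lambda>i. w' i + d i) = ev (idx q)" by (simp add: d_def)
  ultimately show ?case by (simp add: z_def)
qed

lemma h_epi: "hom_epi Q E J H"
  unfolding hom_epi_def
proof (intro ballI equalityI subsetI)
  fix z x assume "x \<in> app E J H z ` space E z" then show "x \<in> space J z" using app_in_space by auto
next
  fix z w assume z: "z \<in> verts Q" and w: "w \<in> space J z"
  have "w = (\<lambda>j. \<Sum>t\<in>bas J z. w t * ev t j)" using expand[OF J_fin w] .
  moreover have "(\<lambda>j. \<Sum>t\<in>bas J z. w t * ev t j) \<in> Img z"
  proof (rule Img_sum[OF J_fin])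
    fix t assume "t \<in> bas J z"
    then obtain q where "q \<in> P" "ps q = z" "t = idx q" by (auto simp: J_bas)
    then show "ev t \<in> Img z" using ev_Img by auto
  qed
  ultimately show "w \<in> app E J H z ` space E z" by (simp add: Img_def)
qed

end


lemma finite_max_len: "finite S \<Longrightarrow> x \<in> S \<Longrightarrow> \<exists>m\<in>S. \<forall>q\<in>S. length q \<le> length m"
proof -
  assume S: "finite S" "x \<in> S"
  let ?M = "Max (length ` S)"
  have "?M \<in> length ` S" using S by (intro Max_in) auto
  then obtain m where m: "m \<in> S" "length m = ?M" by auto
  have "\<forall>q\<in>S. length q \<le> length m" using S m by simp
  then show ?thesis using m by blast
qed

fun Uc :: "('a list \<times> nat) option \<Rightarrow> 'a list set" where
  "Uc None = {}"
| "Uc (Some (w, n)) = {drop k w | k. k \<le> n}"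

context env2 begin

definition valid :: "('a list \<times> nat) option \<Rightarrow> bool" where
  "valid c = (case c of None \<Rightarrow> True | Some (w, n) \<Rightarrow> w \<in> P \<and> n < length w \<and> (\<forall>a. a # w \<notin> P))"

definition Br where "Br b = {q \<in> P. q \<noteq> [] \<and> last q = b}"

lemma SUF: "q1 \<in> P \<Longrightarrow> q2 \<in> P \<Longrightarrow> q1 \<noteq> [] \<Longrightarrow> q2 \<noteq> [] \<Longrightarrow> last q1 = last q2 \<Longrightarrow> length q1 \<le> length q2
   \<Longrightarrow> q1 = drop (length q2 - length q1) q2"
proof (induction q1)
  case Nil then show ?case by simp
next
  case (Cons a q1')
  show ?case
  proof (cases "q1' = []")
    case True
    then have "a = last q2" using Cons.prems by simp
    moreover have "drop (length q2 - 1) q2 = [last q2]" using Cons.prems(4)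
      by (metis One_nat_def append_butlast_last_id append_eq_conv_conj length_butlast)
    ultimately show ?thesis using True by simp
  next
    case False
    have q1'P: "q1' \<in> P" using P_Cons[OF Cons.prems(1)] by simp
    define d where "d = length q2 - length (a # q1')"
    have IH: "q1' = drop (length q2 - length q1') q2"
      using Cons.IH[OF q1'P Cons.prems(2) False Cons.prems(4)] Cons.prems(5,6) False by simp
    have dl: "d < length q2" using Cons.prems(6) by (simp add: d_def)
    have e: "length q2 - length q1' = Suc d" using Cons.prems(6) by (simp add: d_def)
    have dd: "drop d q2 = q2 ! d # q1'" using IH e Cons_nth_drop_Suc[OF dl] by simp
    have "q2 ! d # q1' \<in> P" using P_drop[OF Cons.prems(2), of d] dd by simp
    then have "a = q2 ! d" using P_uniq[OF False Cons.prems(1)] by simp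
    then show ?thesis using dd by (simp add: d_def)
  qed
qed

definition wb where "wb b = (SOME m. m \<in> Br b \<and> (\<forall>q\<in>Br b. length q \<le> length m))"

lemma single_P: "b \<in> arrs Q \<Longrightarrow> tgt Q b = y \<Longrightarrow> [b] \<in> P"
proof -
  assume b: "b \<in> arrs Q" "tgt Q b = y"
  have "[b] \<notin> R" using R_npath by fastforce
  then show ?thesis using b src_v by (simp add: Pset_def npath_Cons)
qed

lemma wb:
  assumes b: "b \<in> arrs Q" "tgt Q b = y"
  shows "wb b \<in> Br b" "\<And>q. q \<in> Br b \<Longrightarrow> length q \<le> length (wb b)"
proof -
  have "[b] \<in> Br b" using single_P[OF b] by (simp add: Br_def)
  moreover have "finite (Br b)" using P_fin by (simp add: Br_def)
  ultimately have "\<exists>m. m \<in> Br b \<and> (\<forall>q\<in>Br b. length q \<le> length m)" using finite_max_len by blast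
  from someI_ex[OF this] show "wb b \<in> Br b" "\<And>q. q \<in> Br b \<Longrightarrow> length q \<le> length (wb b)"
    unfolding wb_def[symmetric] by auto
qed

lemma Br_eq:
  assumes b: "b \<in> arrs Q" "tgt Q b = y"
  shows "Br b = {drop k (wb b) | k. k < length (wb b)}"
proof
  have w: "wb b \<in> P" "wb b \<noteq> []" "last (wb b) = b" using wb(1)[OF b] by (auto simp: Br_def)
  show "Br b \<subseteq> {drop k (wb b) | k. k < length (wb b)}"
  proof
    fix q assume q: "q \<in> Br b"
    then have q': "q \<in> P" "q \<noteq> []" "last q = b" by (auto simp: Br_def)
    have "q = drop (length (wb b) - length q) (wb b)"
      using SUF[OF q'(1) w(1) q'(2) w(2)] q'(3) w(3) wb(2)[OF b q] by simp
    moreover have "length (wb b) - length q < length (wb b)" using q'(2) w(2) by simp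
    ultimately show "q \<in> {drop k (wb b) | k. k < length (wb b)}" by blast
  qed
  show "{drop k (wb b) | k. k < length (wb b)} \<subseteq> Br b"
    using w P_drop by (auto simp: Br_def)
qed

lemma wb_max: "b \<in> arrs Q \<Longrightarrow> tgt Q b = y \<Longrightarrow> a # wb b \<notin> P"
proof
  assume b: "b \<in> arrs Q" "tgt Q b = y" and a: "a # wb b \<in> P"
  have w: "wb b \<noteq> []" "last (wb b) = b" using wb(1)[OF b] by (auto simp: Br_def)
  have "a # wb b \<in> Br b" using a w by (simp add: Br_def)
  then show False using wb(2)[OF b] by fastforce
qed

definition mb where "mb b = (if pth \<noteq> [] \<and> b = last pth then length (wb b) - length pth else length (wb b))"

definition ch where "ch b = (if mb b = 0 then None else Some (wb b, mb b - 1))"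

lemma Br_S:
  assumes b: "b \<in> arrs Q" "tgt Q b = y"
  shows "Br b - Sset = {drop k (wb b) | k. k < mb b}"
proof -
  let ?w = "wb b"
  have w: "?w \<in> P" "?w \<noteq> []" "last ?w = b" using wb(1)[OF b] by (auto simp: Br_def)
  have inS: "drop k ?w \<in> Sset \<longleftrightarrow> \<not> k < mb b" if k: "k < length ?w" for k
  proof (cases "pth \<noteq> [] \<and> b = last pth")
    case True
    have pB: "pth \<in> Br b" using True S_in_P[of 0] by (simp add: Br_def)
    have lp: "length pth \<le> length ?w" using wb(2)[OF b pB] .
    define k0 where "k0 = length ?w - length pth"
    have pe: "pth = drop k0 ?w" using SUF[OF S_in_P[of 0] w(1)] True w lp by (simp add: k0_def)
    have mbe: "mb b = k0" using True by (simp add: mb_def k0_def)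
    show ?thesis
    proof
      assume "drop k ?w \<in> Sset"
      then obtain j where j: "j \<le> length pth" "drop k ?w = drop j pth" by (auto simp: Sset_def)
      then have "drop k ?w = drop (k0 + j) ?w" using pe by (simp add: add.commute)
      then have "length ?w - k = length ?w - (k0 + j)" by (metis length_drop)
      moreover have "k0 + j \<le> length ?w" using j lp by (simp add: k0_def)
      ultimately have "k = k0 + j" using k by linarith
      then show "\<not> k < mb b" using mbe by simp
    next
      assume "\<not> k < mb b"
      then have "k0 \<le> k" using mbe by simp
      then have "drop k ?w = drop (k - k0) pth" using pe by (simp add: add.commute)
      moreover have "k - k0 \<le> length pth" using k lp by (simp add: k0_def)
      ultimately show "drop k ?w \<in> Sset" by (auto simp: Sset_def)
    qed
  next
    case False
    have "drop k ?w \<notin> Sset"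
    proof
      assume "drop k ?w \<in> Sset"
      then obtain j where j: "j \<le> length pth" "drop k ?w = drop j pth" by (auto simp: Sset_def)
      have ne: "drop j pth \<noteq> []" using j k by (metis drop_eq_Nil not_le)
      then have "pth \<noteq> []" by auto
      moreover have "last (drop j pth) = last pth" using ne by simp
      moreover have "last (drop k ?w) = b" using k w by simp
      ultimately show False using False j by simp
    qed
    moreover have "k < mb b" using False k by (auto simp: mb_def)
    ultimately show ?thesis by simp
  qed
  have mbl: "mb b \<le> length ?w" by (simp add: mb_def)
  show ?thesis
    unfolding Br_eq[OF b]
  proof (intro equalityI subsetI)
    fix q assume "q \<in> {drop k ?w | k. k < length ?w} - Sset"
    then obtain k where "k < length ?w" "q = drop k ?w" "q \<notin> Sset" by auto
    then show "q \<in> {drop k ?w | k. k < mb b}" using inS by auto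
  next
    fix q assume "q \<in> {drop k ?w | k. k < mb b}"
    then obtain k where k: "k < mb b" "q = drop k ?w" by auto
    then have "k < length ?w" using mbl by simp
    then show "q \<in> {drop k ?w | k. k < length ?w} - Sset" using inS k by auto
  qed
qed

lemma ch_U: "b \<in> arrs Q \<Longrightarrow> tgt Q b = y \<Longrightarrow> Uc (ch b) = Br b - Sset"
proof -
  assume b: "b \<in> arrs Q" "tgt Q b = y"
  show ?thesis
  proof (cases "mb b = 0")
    case True then show ?thesis using Br_S[OF b] by (simp add: ch_def)
  next
    case False
    have "{drop k (wb b) | k. k \<le> mb b - 1} = {drop k (wb b) | k. k < mb b}"
      using False by (metis (no_types, opaque_lifting) Suc_pred' bot_nat_0.not_eq_extremum less_Suc_eq_le)
    then show ?thesis using Br_S[OF b] False by (simp add: ch_def)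
  qed
qed

lemma ch_valid: "b \<in> arrs Q \<Longrightarrow> tgt Q b = y \<Longrightarrow> valid (ch b)"
proof -
  assume b: "b \<in> arrs Q" "tgt Q b = y"
  have w: "wb b \<in> P" "wb b \<noteq> []" using wb(1)[OF b] by (auto simp: Br_def)
  have "mb b \<le> length (wb b)" by (simp add: mb_def)
  then show ?thesis using w wb_max[OF b] by (auto simp: ch_def valid_def)
qed

lemma P_minus_S: "P - Sset = (\<Union>b\<in>{b\<in>arrs Q. tgt Q b = y}. Br b - Sset)"
proof -
  have "[] \<in> Sset" by (auto simp: Sset_def intro: exI[of _ "length pth"])
  moreover have "q \<in> P \<Longrightarrow> q \<noteq> [] \<Longrightarrow> last q \<in> arrs Q \<and> tgt Q (last q) = y" for q
    by (auto simp: Pset_def is_npath_def is_path_def)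
  ultimately show ?thesis by (auto simp: Br_def)
qed

lemma comb: "\<exists>c1 c2. valid c1 \<and> valid c2 \<and> P - Sset = Uc c1 \<union> Uc c2 \<and> Uc c1 \<inter> Uc c2 = {}"
proof -
  let ?B = "{b\<in>arrs Q. tgt Q b = y}"
  have finB: "finite ?B" using fin_arrs by simp
  have cB: "card ?B \<le> 2" using SA yv by (simp add: string_algebra_def)
  obtain bs where bs: "set bs = ?B" "distinct bs" using finite_distinct_list[OF finB] by blast
  have lbs: "length bs \<le> 2" using bs cB distinct_card by fastforce
  have disj: "b1 \<noteq> b2 \<Longrightarrow> Br b1 \<inter> Br b2 = {}" for b1 b2 by (auto simp: Br_def)
  show ?thesis
  proof (cases bs)
    case Nil
    then have e: "?B = {}" using bs by simp
    have "P - Sset = {}" using P_minus_S unfolding e by simp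
    then show ?thesis by (intro exI[of _ None]) (simp add: valid_def)
  next
    case (Cons b1 bs')
    note C1 = Cons
    show ?thesis
    proof (cases bs')
      case Nil
      have b1: "b1 \<in> arrs Q" "tgt Q b1 = y" using bs Cons by auto
      have e: "?B = {b1}" using bs Cons Nil by simp
      have "P - Sset = Uc (ch b1)" using P_minus_S ch_U[OF b1] unfolding e by simp
      then have "valid (ch b1) \<and> valid None \<and> P - Sset = Uc (ch b1) \<union> Uc None \<and> Uc (ch b1) \<inter> Uc None = {}"
        using ch_valid[OF b1] by (simp add: valid_def)
      then show ?thesis by blast
    next
      case (Cons b2 bs'')
      note C2 = Cons
      then have bs'': "bs'' = []" using lbs C1 by simp
      have b1: "b1 \<in> arrs Q" "tgt Q b1 = y" and b2: "b2 \<in> arrs Q" "tgt Q b2 = y" and ne: "b1 \<noteq> b2"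
        using bs C1 C2 by auto
      have "Uc (ch b1) \<inter> Uc (ch b2) = {}" using ch_U[OF b1] ch_U[OF b2] disj[OF ne] by auto
      moreover have "P - Sset = Uc (ch b1) \<union> Uc (ch b2)"
      proof -
        have e: "?B = {b1, b2}" using bs C1 C2 bs'' by auto
        show ?thesis using P_minus_S ch_U[OF b1] ch_U[OF b2] unfolding e by simp
      qed
      ultimately show ?thesis using ch_valid[OF b1] ch_valid[OF b2] by blast
    qed
  qed
qed

end


context env2 begin

definition Dc :: "('a list \<times> nat) option \<Rightarrow> ('q,'a,'k) rep" where
  "Dc c = (case c of None \<Rightarrow> zrep | Some (w, n) \<Rightarrow> string_rep Q (src Q (hd w)) (take n w))"

definition celt :: "('a list \<times> nat) option \<Rightarrow> nat \<Rightarrow> 'a list" where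
  "celt c k = (case c of None \<Rightarrow> [] | Some (w, n) \<Rightarrow> drop k w)"

lemma Dc_None_bas: "bas (Dc None) z = {}" by (simp add: Dc_def zrep_def)

lemma ch_path:
  assumes v: "valid (Some (w, n))"
  shows "is_path Q (src Q (hd w)) w" "w \<noteq> []" "w \<in> P" "n < length w"
proof -
  show wP: "w \<in> P" and nl: "n < length w" using v by (auto simp: valid_def)
  then show wne: "w \<noteq> []" by auto
  show "is_path Q (src Q (hd w)) w" using P_path[OF yv wP] wne by (simp add: pstart_def)
qed

lemma ch_pv:
  assumes v: "valid (Some (w, n))" and k: "k \<le> n"
  shows "path_vertex Q (src Q (hd w)) (take n w) k = ps (drop k w)"
proof -
  note cp = ch_path[OF v]
  show ?thesis
  proof (cases k)
    case 0 then show ?thesis using cp by (simp add: path_vertex_def pstart_def)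
  next
    case (Suc k')
    have kl: "k < length w" using k cp(4) by simp
    have "src Q (w ! k) = path_vertex Q (src Q (hd w)) w k" by (rule path_src_nth[OF cp(1) kl])
    moreover have "drop k w = w ! k # drop (Suc k) w" using kl by (simp add: Cons_nth_drop_Suc)
    ultimately show ?thesis using Suc k cp by (simp add: path_vertex_def)
  qed
qed

lemma Dc_bas: "valid (Some (w, n)) \<Longrightarrow> bas (Dc (Some (w, n))) z = {k. k \<le> n \<and> ps (drop k w) = z}"
proof -
  assume v: "valid (Some (w, n))"
  have "length (take n w) = n" using ch_path(4)[OF v] by simp
  then show ?thesis using ch_pv[OF v] by (auto simp: Dc_def sr_bas)
qed

lemma Dc_fin: "finite (bas (Dc c) z)"
  by (cases c) (auto simp: Dc_def zrep_def sr_fin)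

lemma Dc_rep: "valid c \<Longrightarrow> is_rep Q R (Dc c)"
proof (cases c)
  case None then show ?thesis using zrep_is_rep[of R] R_nonempty by (simp add: Dc_def)
next
  case (Some a)
  then obtain w n where c: "c = Some (w, n)" by (cases a) auto
  assume v: "valid c"
  note cp = ch_path[OF v[unfolded c]]
  have pt: "is_path Q (src Q (hd w)) (take n w)" using path_take[OF cp(1)] .
  have "take n w \<notin> R"
  proof
    assume r: "take n w \<in> R"
    have np: "is_npath Q w" using path_npath[OF cp(1) cp(2)] .
    have "w \<notin> R" using cp(3) cp(2) by (simp add: Pset_def)
    then show False using R_close[OF r, of "[]" "drop n w"] np by simp
  qed
  then show ?thesis using sr_is_rep[OF pt] c by (simp add: Dc_def)
qed

lemma Dc_dir: "valid c \<Longrightarrow> zero_rep Q (Dc c) \<or> directed_string_module Q R (Dc c)"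
proof (cases c)
  case None then show ?thesis by (simp add: Dc_def zrep_zero)
next
  case (Some a)
  then obtain w n where c: "c = Some (w, n)" by (cases a) auto
  assume v: "valid c"
  note cp = ch_path[OF v[unfolded c]]
  have pt: "is_path Q (src Q (hd w)) (take n w)" using path_take[OF cp(1)] .
  have "take n w \<notin> R"
  proof
    assume r: "take n w \<in> R"
    have np: "is_npath Q w" using path_npath[OF cp(1) cp(2)] .
    have "w \<notin> R" using cp(3) cp(2) by (simp add: Pset_def)
    then show False using R_close[OF r, of "[]" "drop n w"] np by simp
  qed
  moreover have "isomorphic Q (Dc c) (Dc c)" by (rule iso_refl) (simp add: Dc_fin)
  then have "isomorphic Q (Dc c) (string_rep Q (src Q (hd w)) (take n w))"
    using c by (simp add: Dc_def)
  ultimately show ?thesis using pt c unfolding directed_string_module_def by blast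
qed

lemma ch_elt:
  assumes v: "valid c" and k: "k \<in> bas (Dc c) z"
  shows "celt c k \<in> Uc c" "celt c k \<in> P" "ps (celt c k) = z"
proof -
  obtain w n where c: "c = Some (w, n)" using k by (cases c) (auto simp: Dc_None_bas)
  have kk: "k \<le> n" "ps (drop k w) = z" using k Dc_bas[OF v[unfolded c]] c by auto
  show "celt c k \<in> Uc c" using kk c by (auto simp: celt_def)
  show "celt c k \<in> P" using c kk P_drop ch_path(3)[OF v[unfolded c]] by (simp add: celt_def)
  show "ps (celt c k) = z" using c kk by (simp add: celt_def)
qed

lemma ch_inj:
  assumes v: "valid c" and k: "k \<in> bas (Dc c) z" and k': "k' \<in> bas (Dc c) z'" and e: "celt c k = celt c k'"
  shows "k = k'"
proof -
  obtain w n where c: "c = Some (w, n)" using k by (cases c) (auto simp: Dc_None_bas)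
  have "k \<le> n" "k' \<le> n" using k k' Dc_bas[OF v[unfolded c]] c by auto
  moreover have "n < length w" using ch_path(4)[OF v[unfolded c]] .
  moreover have "length (drop k w) = length (drop k' w)" using e c by (simp add: celt_def)
  ultimately show ?thesis by simp
qed

lemma ch_act:
  fixes u :: "nat \<Rightarrow> 'k"
  assumes v: "valid c" and k: "k \<in> bas (Dc c) (tgt Q a)"
  shows "act Q (Dc c) a u k = (if a # celt c k \<in> P then u (k - 1) else 0)"
    and "a # celt c k \<in> P \<Longrightarrow> 0 < k \<and> celt c (k - 1) = a # celt c k \<and> k - 1 \<in> bas (Dc c) (src Q a)"
proof -
  obtain w n where c: "c = Some (w, n)" using k by (cases c) (auto simp: Dc_None_bas)
  note cp = ch_path[OF v[unfolded c]]
  have kk: "k \<le> n" "ps (drop k w) = tgt Q a" using k Dc_bas[OF v[unfolded c]] c by auto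
  have kl: "k < length w" using kk cp(4) by simp
  have iff: "a # drop k w \<in> P \<longleftrightarrow> 0 < k \<and> w ! (k - 1) = a"
  proof
    assume A: "a # drop k w \<in> P"
    show "0 < k \<and> w ! (k - 1) = a"
    proof (cases k)
      case 0 then show ?thesis using A v c by (simp add: valid_def)
    next
      case (Suc k')
      have "drop k' w = w ! k' # drop k w" using kl Suc by (simp add: Cons_nth_drop_Suc)
      then have "w ! k' # drop k w \<in> P" using P_drop[OF cp(3), of k'] by simp
      moreover have "drop k w \<noteq> []" using kl by simp
      ultimately have "w ! k' = a" using P_uniq[where q="drop k w" and a="w ! k'" and b=a] A by simp
      then show ?thesis using Suc by simp
    qed
  next
    assume B: "0 < k \<and> w ! (k - 1) = a"
    have k1: "k - 1 < length w" "Suc (k - 1) = k" using kl B by auto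
    have "drop (k - 1) w = w ! (k - 1) # drop (Suc (k - 1)) w" by (rule Cons_nth_drop_Suc[OF k1(1), symmetric])
    then have "drop (k - 1) w = a # drop k w" using B k1(2) by simp
    then show "a # drop k w \<in> P" using P_drop[OF cp(3), of "k - 1"] by simp
  qed
  have pt: "is_path Q (src Q (hd w)) (take n w)" using path_take[OF cp(1)] .
  have tk: "0 < k \<Longrightarrow> take n w ! (k - 1) = w ! (k - 1)" using kk by simp
  have sa: "act Q (Dc c) a u k = (if 0 < k \<and> k \<le> length (take n w) \<and> take n w ! (k - 1) = a then u (k - 1) else 0)"
    using sr_act[OF pt, of a u k] c by (simp add: Dc_def)
  have ln: "length (take n w) = n" using cp(4) by simp
  have "(0 < k \<and> k \<le> length (take n w) \<and> take n w ! (k - 1) = a) \<longleftrightarrow> a # celt c k \<in> P"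
    using iff kk(1) tk ln c by (auto simp: celt_def)
  then show "act Q (Dc c) a u k = (if a # celt c k \<in> P then u (k - 1) else 0)"
    using sa by simp
  assume A: "a # celt c k \<in> P"
  then have B: "0 < k" "w ! (k - 1) = a" using iff c by (auto simp: celt_def)
  have k1: "k - 1 < length w" "Suc (k - 1) = k" using kl B by auto
  have "drop (k - 1) w = w ! (k - 1) # drop (Suc (k - 1)) w" by (rule Cons_nth_drop_Suc[OF k1(1), symmetric])
  then have d: "drop (k - 1) w = a # drop k w" using B k1(2) by simp
  have "k - 1 \<in> bas (Dc c) (src Q a)" using Dc_bas[OF v[unfolded c]] kk d c by simp
  then show "0 < k \<and> celt c (k - 1) = a # celt c k \<and> k - 1 \<in> bas (Dc c) (src Q a)"
    using B d c by (simp add: celt_def)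
qed

end


locale fin = main Q R y idx kk x0 pth M E i T for Q :: "('q,'a) quiver" and R y idx and kk :: "'k::field" and x0 pth M E i T +
  fixes C :: "('q,'a,'k) rep" and p :: "'q \<Rightarrow> nat \<Rightarrow> nat \<Rightarrow> 'k" and c1 c2 :: "('a list \<times> nat) option"
  assumes repC: "is_rep Q R C" and phom: "is_hom Q E C p" and pepi: "hom_epi Q E C p"
    and pker: "\<forall>x\<in>verts Q. {v \<in> space E x. app E C p x v = (\<lambda>_. 0)} = app M E i x ` space M x"
    and v1: "valid c1" and v2: "valid c2" and cov: "P - Sset = Uc c1 \<union> Uc c2" and dis: "Uc c1 \<inter> Uc c2 = {}"
begin

abbreviation D where "D \<equiv> dsum (Dc c1) (Dc c2)"

definition elt where "elt t = (if even t then celt c1 (t div 2) else celt c2 (t div 2))"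

lemma D_bas: "t \<in> bas D z \<longleftrightarrow> (even t \<and> t div 2 \<in> bas (Dc c1) z) \<or> (odd t \<and> t div 2 \<in> bas (Dc c2) z)"
proof
  assume "t \<in> bas D z" then show "(even t \<and> t div 2 \<in> bas (Dc c1) z) \<or> (odd t \<and> t div 2 \<in> bas (Dc c2) z)"
    by (auto simp: dsum_bas)
next
  assume "(even t \<and> t div 2 \<in> bas (Dc c1) z) \<or> (odd t \<and> t div 2 \<in> bas (Dc c2) z)"
  then show "t \<in> bas D z"
  proof
    assume A: "even t \<and> t div 2 \<in> bas (Dc c1) z"
    have "t \<in> (\<lambda>i. 2 * i) ` bas (Dc c1) z" using A by (intro image_eqI[where x="t div 2"]) auto
    then show ?thesis by (simp add: dsum_bas)
  next
    assume A: "odd t \<and> t div 2 \<in> bas (Dc c2) z"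
    have "t \<in> (\<lambda>i. 2 * i + 1) ` bas (Dc c2) z" using A by (intro image_eqI[where x="t div 2"]) auto
    then show ?thesis by (simp add: dsum_bas)
  qed
qed

lemma D_fin: "finite (bas D z)" by (simp add: dsum_bas Dc_fin)

lemma elt_props:
  assumes t: "t \<in> bas D z"
  shows "elt t \<in> P" "ps (elt t) = z" "elt t \<notin> Sset"
proof -
  have "elt t \<in> P \<and> ps (elt t) = z \<and> (elt t \<in> Uc c1 \<or> elt t \<in> Uc c2)"
    using t ch_elt[OF v1] ch_elt[OF v2] by (auto simp: D_bas elt_def)
  then show "elt t \<in> P" "ps (elt t) = z" "elt t \<notin> Sset" using cov by auto
qed

lemma elt_inj:
  assumes t: "t \<in> bas D z" and t': "t' \<in> bas D z'" and e: "elt t = elt t'"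
  shows "t = t'"
proof -
  have A: "even t \<Longrightarrow> elt t \<in> Uc c1" "odd t \<Longrightarrow> elt t \<in> Uc c2"
    "even t' \<Longrightarrow> elt t' \<in> Uc c1" "odd t' \<Longrightarrow> elt t' \<in> Uc c2"
    using t t' ch_elt(1)[OF v1] ch_elt(1)[OF v2] by (auto simp: D_bas elt_def)
  have par: "even t \<longleftrightarrow> even t'"
  proof (rule ccontr)
    assume "\<not> (even t \<longleftrightarrow> even t')"
    then have "elt t \<in> Uc c1 \<inter> Uc c2" using A e by (cases "even t") auto
    then show False using dis by simp
  qed
  show ?thesis
  proof (cases "even t")
    case True
    then have "t div 2 = t' div 2" using ch_inj[OF v1, of "t div 2" z "t' div 2" z'] t t' e par
      by (auto simp: D_bas elt_def)
    moreover have "t = 2 * (t div 2)" "t' = 2 * (t' div 2)" using True par by simp_all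
    ultimately show ?thesis by simp
  next
    case False
    then have "t div 2 = t' div 2" using ch_inj[OF v2, of "t div 2" z "t' div 2" z'] t t' e par
      by (auto simp: D_bas elt_def)
    moreover have "t = 2 * (t div 2) + 1" "t' = 2 * (t' div 2) + 1" using False par by simp_all
    ultimately show ?thesis by simp
  qed
qed

definition pim :: "'q \<Rightarrow> nat \<Rightarrow> nat \<Rightarrow> 'k" where
  "pim z t l = (if t \<in> bas D z \<and> l = idx (elt t) then 1 else 0)"

lemma pi1: "app J D pim z v t = (if t \<in> bas D z then v (idx (elt t)) else 0)"
proof (cases "t \<in> bas D z")
  case True
  have inb: "idx (elt t) \<in> bas J z" using elt_props[OF True] J_bas_mem by simp
  have "(\<Sum>l\<in>bas J z. pim z t l * v l) = (\<Sum>l\<in>bas J z. if l = idx (elt t) then v (idx (elt t)) else 0)"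
    by (rule sum.cong) (auto simp: pim_def True)
  also have "\<dots> = v (idx (elt t))" using inb J_fin by (simp add: sum.delta')
  finally show ?thesis using True by (simp add: app_def)
qed (simp add: app_def)

lemma pi_hom: "is_hom Q J D pim"
  unfolding is_hom_def
proof (intro ballI ext)
  fix a v t assume a: "a \<in> arrs Q" and v: "v \<in> space J (src Q a)"
  show "app J D pim (tgt Q a) (act Q J a v) t = act Q D a (app J D pim (src Q a) v) t"
  proof (cases "t \<in> bas D (tgt Q a)")
    case False then show ?thesis by (simp add: pi1 act_out)
  next
    case True
    have ep: "elt t \<in> P" "ps (elt t) = tgt Q a" using elt_props[OF True] by auto
    have L: "app J D pim (tgt Q a) (act Q J a v) t = (if a # elt t \<in> P then v (idx (a # elt t)) else 0)"
      using pi1 True J_act[OF ep(1), of a v] ep(2) by simp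
    show ?thesis
    proof (cases "even t")
      case True
      define k where "k = t div 2"
      have tk: "t = 2 * k" using True by (simp add: k_def)
      have kb: "k \<in> bas (Dc c1) (tgt Q a)" using \<open>t \<in> bas D (tgt Q a)\<close> True by (simp add: D_bas k_def)
      have et: "elt t = celt c1 k" using True by (simp add: elt_def k_def)
      have "act Q D a (app J D pim (src Q a) v) t = act Q (Dc c1) a (\<lambda>k'. app J D pim (src Q a) v (2 * k')) k"
        unfolding tk by (rule dsum_act_even[OF Dc_fin Dc_fin])
      also have "\<dots> = (if a # celt c1 k \<in> P then app J D pim (src Q a) v (2 * (k - 1)) else 0)"
        by (rule ch_act(1)[OF v1 kb])
      also have "\<dots> = (if a # elt t \<in> P then v (idx (a # elt t)) else 0)"
      proof (cases "a # celt c1 k \<in> P")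
        case True
        note ca = ch_act(2)[OF v1 kb True]
        have "2 * (k - 1) \<in> bas D (src Q a)" using ca by (simp add: D_bas)
        moreover have "elt (2 * (k - 1)) = a # celt c1 k" using ca by (simp add: elt_def)
        ultimately show ?thesis using True et by (simp add: pi1)
      qed (simp add: et)
      finally show ?thesis using L by simp
    next
      case False
      define k where "k = t div 2"
      have tk: "t = 2 * k + 1" using False by (simp add: k_def)
      have kb: "k \<in> bas (Dc c2) (tgt Q a)" using \<open>t \<in> bas D (tgt Q a)\<close> False by (simp add: D_bas k_def)
      have et: "elt t = celt c2 k" using False by (simp add: elt_def k_def)
      have "act Q D a (app J D pim (src Q a) v) t = act Q (Dc c2) a (\<lambda>k'. app J D pim (src Q a) v (2 * k' + 1)) k"
        unfolding tk by (rule dsum_act_odd[OF Dc_fin Dc_fin])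
      also have "\<dots> = (if a # celt c2 k \<in> P then app J D pim (src Q a) v (2 * (k - 1) + 1) else 0)"
        by (rule ch_act(1)[OF v2 kb])
      also have "\<dots> = (if a # elt t \<in> P then v (idx (a # elt t)) else 0)"
      proof (cases "a # celt c2 k \<in> P")
        case True
        note ca = ch_act(2)[OF v2 kb True]
        have "2 * (k - 1) + 1 \<in> bas D (src Q a)" using ca by (simp add: D_bas)
        moreover have "elt (2 * (k - 1) + 1) = a # celt c2 k" using ca by (simp add: elt_def)
        ultimately show ?thesis using True et by (simp add: pi1)
      qed (simp add: et)
      finally show ?thesis using L by simp
    qed
  qed
qed

lemma pi_ker:
  assumes v: "v \<in> space J z" and z: "app J D pim z v = (\<lambda>_. 0)"
  shows "\<forall>q\<in>P. q \<notin> Sset \<longrightarrow> v (idx q) = 0"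
proof (intro ballI impI)
  fix q assume q: "q \<in> P" "q \<notin> Sset"
  show "v (idx q) = 0"
  proof (cases "ps q = z")
    case False
    then have "idx q \<notin> bas J z" using J_bas_mem[OF q(1)] by simp
    then show ?thesis using v by (simp add: space_def)
  next
    case True
    have "q \<in> Uc c1 \<or> q \<in> Uc c2" using cov q by auto
    then obtain t where t: "t \<in> bas D z" "elt t = q"
    proof
      assume "q \<in> Uc c1"
      then obtain w n k where c: "c1 = Some (w, n)" "k \<le> n" "q = drop k w" by (cases c1) auto
      have "k \<in> bas (Dc (Some (w, n))) z" using Dc_bas[OF v1[unfolded c(1)]] c True by simp
      then have "k \<in> bas (Dc c1) z" using c(1) by simp
      moreover have "celt c1 k = q" using c by (simp add: celt_def)
      ultimately have "2 * k \<in> bas D z" "elt (2 * k) = q" by (auto simp: D_bas elt_def)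
      then show ?thesis using that by blast
    next
      assume "q \<in> Uc c2"
      then obtain w n k where c: "c2 = Some (w, n)" "k \<le> n" "q = drop k w" by (cases c2) auto
      have "k \<in> bas (Dc (Some (w, n))) z" using Dc_bas[OF v2[unfolded c(1)]] c True by simp
      then have "k \<in> bas (Dc c2) z" using c(1) by simp
      moreover have "celt c2 k = q" using c by (simp add: celt_def)
      ultimately have "2 * k + 1 \<in> bas D z" "elt (2 * k + 1) = q" by (auto simp: D_bas elt_def)
      then show ?thesis using that by blast
    qed
    have "app J D pim z v t = v (idx q)" using pi1 t by simp
    then show ?thesis using z by simp
  qed
qed

lemma pi_jm: "app J D pim z (app M J jm z m) = (\<lambda>_. 0)"
proof
  fix t show "app J D pim z (app M J jm z m) t = 0"
    using pi1 elt_props j_supp by simp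
qed

lemma pi_surj:
  assumes d: "d \<in> space D z"
  shows "\<exists>w\<in>space J z. app J D pim z w = d"
proof -
  define w where "w = (\<lambda>l. \<Sum>t\<in>bas D z. d t * ev (idx (elt t)) l)"
  have "w \<in> space J z"
    unfolding w_def
  proof (rule space_sum)
    fix t assume "t \<in> bas D z"
    then have "idx (elt t) \<in> bas J z" using elt_props J_bas_mem by simp
    then show "(\<lambda>l. d t * ev (idx (elt t)) l) \<in> space J z" by (intro space_scale space_ev)
  qed
  moreover have "app J D pim z w = d"
  proof
    fix t' show "app J D pim z w t' = d t'"
    proof (cases "t' \<in> bas D z")
      case False then show ?thesis using d by (simp add: pi1 space_def)
    next
      case True
      have "w (idx (elt t')) = (\<Sum>t\<in>bas D z. if t = t' then d t' else 0)"
        unfolding w_def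
      proof (rule sum.cong)
        fix t assume t: "t \<in> bas D z"
        have "idx (elt t) = idx (elt t') \<longleftrightarrow> t = t'"
          using idx_eq[OF elt_props(1)[OF t] elt_props(1)[OF True]] elt_inj[OF t True] by auto
        then show "d t * ev (idx (elt t)) (idx (elt t')) = (if t = t' then d t' else 0)"
          by (auto simp: ev_def)
      qed simp
      also have "\<dots> = d t'" using True D_fin by (simp add: sum.delta')
      finally show ?thesis using True by (simp add: pi1)
    qed
  qed
  ultimately show ?thesis by blast
qed

end


context fin begin

definition sct where "sct z l = (SOME e. e \<in> space E z \<and> app E C p z e = ev l)"
definition Pi where "Pi z e = app J D pim z (app E J H z e)"
definition Fm :: "'q \<Rightarrow> nat \<Rightarrow> nat \<Rightarrow> 'k" where "Fm z t l = Pi z (sct z l) t"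

lemma finC: "finite (bas C z)" using repC by (simp add: is_rep_def)

lemma sct: "z \<in> verts Q \<Longrightarrow> l \<in> bas C z \<Longrightarrow> sct z l \<in> space E z \<and> app E C p z (sct z l) = ev l"
proof -
  assume z: "z \<in> verts Q" and l: "l \<in> bas C z"
  have "ev l \<in> app E C p z ` space E z" using pepi z space_ev[OF l] unfolding hom_epi_def by blast
  then have "\<exists>e. e \<in> space E z \<and> app E C p z e = ev l" by (auto simp: image_iff)
  from someI_ex[OF this] show ?thesis unfolding sct_def .
qed

lemma Pi_lin: "Pi z (\<lambda>i. \<Sum>l\<in>L. c l * f l i) = (\<lambda>t. \<Sum>l\<in>L. c l * Pi z (f l) t)"
  unfolding Pi_def by (simp add: app_sum_scale)

lemma Pi_diff: "Pi z (\<lambda>i. u i - w i) = (\<lambda>t. Pi z u t - Pi z w t)"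
  unfolding Pi_def by (simp add: app_diff)

lemma Pi_ker: "m \<in> space M z \<Longrightarrow> Pi z (app M E i z m) = (\<lambda>_. 0)"
  unfolding Pi_def by (simp add: h_i pi_jm)

lemma F1:
  assumes z: "z \<in> verts Q" and e: "e \<in> space E z"
  shows "app C D Fm z (app E C p z e) = Pi z e"
proof -
  define c where "c = app E C p z e"
  have csp: "c \<in> space C z" unfolding c_def by (rule app_in_space)
  define e2 where "e2 = (\<lambda>i. \<Sum>l\<in>bas C z. c l * sct z l i)"
  have e2sp: "e2 \<in> space E z" unfolding e2_def
    by (rule space_sum) (use sct[OF z] in \<open>auto intro: space_scale\<close>)
  have "app E C p z e2 = (\<lambda>j. \<Sum>l\<in>bas C z. c l * app E C p z (sct z l) j)"
    unfolding e2_def by (rule app_sum_scale)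
  also have "\<dots> = (\<lambda>j. \<Sum>l\<in>bas C z. c l * ev l j)"
  proof
    fix j show "(\<Sum>l\<in>bas C z. c l * app E C p z (sct z l) j) = (\<Sum>l\<in>bas C z. c l * ev l j)"
      by (rule sum.cong) (use sct[OF z] in auto)
  qed
  also have "\<dots> = c" using expand[OF finC csp] by simp
  finally have pe2: "app E C p z e2 = c" .
  define df where "df = (\<lambda>i. e i - e2 i)"
  have dfsp: "df \<in> space E z" unfolding df_def using e e2sp by (rule space_diff)
  have "app E C p z df = (\<lambda>_. 0)" unfolding df_def using pe2 by (simp add: app_diff c_def)
  then have "df \<in> app M E i z ` space M z" using pker z dfsp by blast
  then obtain m where m: "m \<in> space M z" "df = app M E i z m" by auto
  have "Pi z df = (\<lambda>_. 0)" using Pi_ker[OF m(1)] m(2) by simp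
  then have PE: "Pi z e = Pi z e2" unfolding df_def Pi_diff by (simp add: fun_eq_iff)
  have "Pi z e2 = (\<lambda>t. \<Sum>l\<in>bas C z. c l * Pi z (sct z l) t)" unfolding e2_def by (rule Pi_lin)
  moreover have "app C D Fm z c = (\<lambda>t. \<Sum>l\<in>bas C z. c l * Pi z (sct z l) t)"
  proof
    fix t show "app C D Fm z c t = (\<Sum>l\<in>bas C z. c l * Pi z (sct z l) t)"
    proof (cases "t \<in> bas D z")
      case True then show ?thesis by (simp add: app_def Fm_def mult.commute)
    next
      case False
      then have "\<And>l. Pi z (sct z l) t = 0" by (simp add: Pi_def app_out)
      then show ?thesis using False by (simp add: app_out)
    qed
  qed
  ultimately show ?thesis using PE by (simp add: c_def)
qed

lemma srcv: "a \<in> arrs Q \<Longrightarrow> src Q a \<in> verts Q" by (rule src_v)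

lemma C_pre: "z \<in> verts Q \<Longrightarrow> c \<in> space C z \<Longrightarrow> \<exists>e\<in>space E z. app E C p z e = c"
proof -
  assume z: "z \<in> verts Q" and c: "c \<in> space C z"
  have "c \<in> app E C p z ` space E z" using pepi z c unfolding hom_epi_def by simp
  then show ?thesis by (auto simp: image_iff)
qed

lemma F_hom: "is_hom Q C D Fm"
  unfolding is_hom_def
proof (intro ballI)
  fix a c assume a: "a \<in> arrs Q" and c: "c \<in> space C (src Q a)"
  obtain e where e: "e \<in> space E (src Q a)" "app E C p (src Q a) e = c" using C_pre[OF src_v[OF a] c] by blast
  have ac: "act Q C a c = app E C p (tgt Q a) (act Q E a e)" using phom a e unfolding is_hom_def by auto
  have "app C D Fm (tgt Q a) (act Q C a c) = Pi (tgt Q a) (act Q E a e)"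
    using ac F1[OF tgt_v[OF a] act_in_space] by simp
  also have "\<dots> = app J D pim (tgt Q a) (act Q J a (app E J H (src Q a) e))"
    unfolding Pi_def using h_hom a e unfolding is_hom_def by auto
  also have "\<dots> = act Q D a (app J D pim (src Q a) (app E J H (src Q a) e))"
    using pi_hom a app_in_space[of E J H "src Q a" e] unfolding is_hom_def by blast
  also have "\<dots> = act Q D a (app C D Fm (src Q a) c)"
    using F1[OF src_v[OF a] e(1)] e(2) by (simp add: Pi_def)
  finally show "app C D Fm (tgt Q a) (act Q C a c) = act Q D a (app C D Fm (src Q a) c)" .
qed

lemma F_mono: "hom_mono Q C D Fm"
  unfolding hom_mono_def inj_on_def
proof (intro ballI impI)
  fix z c1' c2' assume z: "z \<in> verts Q" and c: "c1' \<in> space C z" "c2' \<in> space C z"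
    and eq: "app C D Fm z c1' = app C D Fm z c2'"
  obtain e1 where e1: "e1 \<in> space E z" "app E C p z e1 = c1'" using C_pre[OF z c(1)] by blast
  obtain e2 where e2: "e2 \<in> space E z" "app E C p z e2 = c2'" using C_pre[OF z c(2)] by blast
  define df where "df = (\<lambda>i. e1 i - e2 i)"
  have dfsp: "df \<in> space E z" unfolding df_def using e1(1) e2(1) by (rule space_diff)
  have "Pi z e1 = Pi z e2" using eq F1[OF z e1(1)] F1[OF z e2(1)] e1 e2 by simp
  then have "Pi z df = (\<lambda>_. 0)" unfolding df_def Pi_diff by (simp add: fun_eq_iff)
  then have "app J D pim z (app E J H z df) = (\<lambda>_. 0)" by (simp add: Pi_def)
  then have "\<forall>q\<in>P. q \<notin> Sset \<longrightarrow> app E J H z df (idx q) = 0" by (rule pi_ker[OF app_in_space])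
  then obtain m where m: "m \<in> space M z" "app M J jm z m = app E J H z df"
    using j_img[OF z app_in_space] by blast
  have "app E J H z (app M E i z m) = app E J H z df" using h_i[OF m(1)] m(2) by simp
  moreover have "inj_on (app E J H z) (space E z)" using h_mono z unfolding hom_mono_def by blast
  moreover have "app M E i z m \<in> space E z" by (rule app_in_space)
  ultimately have "app M E i z m = df" using dfsp unfolding inj_on_def by blast
  then have "df \<in> {v \<in> space E z. app E C p z v = (\<lambda>_. 0)}" using pker z m(1) by blast
  then have "app E C p z df = (\<lambda>_. 0)" by simp
  then have "(\<lambda>j. c1' j - c2' j) = (\<lambda>_. 0)" unfolding df_def app_diff using e1 e2 by simp
  then show "c1' = c2'" by (simp add: fun_eq_iff)
qed

lemma F_epi: "hom_epi Q C D Fm"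
  unfolding hom_epi_def
proof (intro ballI equalityI subsetI)
  fix z x assume "x \<in> app C D Fm z ` space C z" then show "x \<in> space D z" using app_in_space by auto
next
  fix z d assume z: "z \<in> verts Q" and d: "d \<in> space D z"
  obtain w where w: "w \<in> space J z" "app J D pim z w = d" using pi_surj[OF d] by blast
  have "w \<in> app E J H z ` space E z" using h_epi z w(1) unfolding hom_epi_def by blast
  then obtain e where e: "e \<in> space E z" "app E J H z e = w" by auto
  have "app C D Fm z (app E C p z e) = d" using F1[OF z e(1)] e(2) w(2) by (simp add: Pi_def)
  moreover have "app E C p z e \<in> space C z" by (rule app_in_space)
  ultimately show "d \<in> app C D Fm z ` space C z" by (rule image_eqI[where f="app C D Fm z", OF sym])
qed

lemma fin_iso: "isomorphic Q C D"
  unfolding isomorphic_def using F_hom F_mono F_epi by blast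

end

theorem lemma3p3:
  fixes Q :: "('q,'a) quiver" and R :: "'a list set"
    and M E C :: "('q,'a,'k::field) rep"
    and i p :: "'q \<Rightarrow> nat \<Rightarrow> nat \<Rightarrow> 'k"
  assumes "string_algebra Q R"
    and "is_rep Q R M"
    and "directed_string_module Q R M"
    and "injective_envelope Q R M E i"
    and "is_rep Q R C"
    and "is_hom Q E C p"
    and "hom_epi Q E C p"
    and "\<forall>x\<in>verts Q. {v \<in> space E x. app E C p x v = (\<lambda>_. 0)} = app M E i x ` space M x"
  shows "\<exists>D1 D2. is_rep Q R D1 \<and> is_rep Q R D2 \<and> isomorphic Q C (dsum D1 D2)
           \<and> (zero_rep Q D1 \<or> directed_string_module Q R D1)
           \<and> (zero_rep Q D2 \<or> directed_string_module Q R D2)"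
proof -
  interpret sa Q R using assms(1) by (rule sa.intro)
  obtain x0 pth where xp: "is_path Q x0 pth" "pth \<notin> R" "isomorphic Q M (string_rep Q x0 pth)"
    using assms(3) unfolding directed_string_module_def by blast
  obtain T where T: "is_hom Q M (string_rep Q x0 pth) T" "hom_mono Q M (string_rep Q x0 pth) T"
      "hom_epi Q M (string_rep Q x0 pth) T"
    using xp(3) unfolding isomorphic_def by blast
  define y where "y = pend Q x0 pth"
  have yv: "y \<in> verts Q" unfolding y_def by (rule is_path_pend_v[OF xp(1)])
  obtain idx :: "'a list \<Rightarrow> nat" and n where idx: "idx ` Pset y = {i. i < n}" "inj_on idx (Pset y)"
    using finite_imp_inj_to_nat_seg[OF P_fin[of y]] by blast
  interpret env2 Q R y idx "1::'k" x0 pth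
    by (unfold_locales) (use yv idx(2) xp y_def in auto)
  interpret main Q R y idx "1::'k" x0 pth M E i T
    by (unfold_locales) (use assms(2) assms(4) T in auto)
  obtain c1 c2 where cc: "valid c1" "valid c2" "Pset y - Sset = Uc c1 \<union> Uc c2" "Uc c1 \<inter> Uc c2 = {}"
    using comb by blast
  interpret fin Q R y idx "1::'k" x0 pth M E i T C p c1 c2
    by (unfold_locales) (use assms(5-8) cc in auto)
  show ?thesis
    using Dc_rep[OF cc(1)] Dc_rep[OF cc(2)] fin_iso Dc_dir[OF cc(1)] Dc_dir[OF cc(2)] by blast
qed

end
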